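(* Let $\mathcal{R}$ be a von Neumann algebra and $A\in\mathcal{R}_{sa}$. Then the observable function $f_A:\mathcal{Q}(\mathcal{R})\to\mathbb{R}$ is continuous.
   Context: $\mathcal{R}_{sa}$ is the set of self-adjoint elements of $\mathcal{R}$; $\mathcal{P}(\mathcal{R})$ the lattice of projections of $\mathcal{R}$. A quasipoint of $\mathcal{P}(\mathcal{R})$ is a maximal subset $\mathfrak{B}\subseteq\mathcal{P}(\mathcal{R})$ such that $0\notin\mathfrak{B}$ and for all $P,Q\in\mathfrak{B}$ there is $R\in\mathfrak{B}$ with $R\le P\wedge Q$. $\mathcal{Q}(\mathcal{R})$ is the set of quasipoints (Stone spectrum), with the topology generated by the basis $\mathcal{Q}_P(\mathcal{R})=\{\mathfrak{B}: P\in\mathfrak{B}\}$, $P\in\mathcal{P}(\mathcal{R})$. If $(E^A_\lambda)_{\lambda\in\mathbb{R}}$ is the (right-continuous) spectral family of $A$, the observable function of $A$ is $f_A(\mathfrak{B}):=\inf\{\lambda\in\mathbb{R} : E^A_\lambda\in\mathfrak{B}\}$. *)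

theory Defs
  imports "HOL-Analysis.Analysis"
begin

text \<open>The
  inner product is linear in the second and conjugate-linear in the first argument.\<close>

class complex_inner = real_normed_vector +
  fixes scaleC :: "complex \<Rightarrow> 'a \<Rightarrow> 'a"
    and cinner :: "'a \<Rightarrow> 'a \<Rightarrow> complex"
  assumes scaleC_add_right: "scaleC a (x + y) = scaleC a x + scaleC a y"
    and scaleC_add_left: "scaleC (a + b) x = scaleC a x + scaleC b x"
    and scaleC_scaleC: "scaleC a (scaleC b x) = scaleC (a * b) x"
    and scaleC_one: "scaleC 1 x = x"
    and scaleC_of_real: "scaleC (complex_of_real r) x = scaleR r x"
    and cinner_commute: "cinner x y = cnj (cinner y x)"
    and cinner_add_left: "cinner (x + y) z = cinner x z + cinner y z"
    and cinner_scaleC_left: "cinner (scaleC c x) y = cnj c * cinner x y"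
    and cinner_self_nonneg: "Im (cinner x x) = 0 \<and> 0 \<le> Re (cinner x x)"
    and cinner_self_eq_zero: "cinner x x = 0 \<longleftrightarrow> x = 0"
    and norm_eq_sqrt_cinner: "norm x = sqrt (Re (cinner x x))"

class chilbert = complex_inner + complete_space

definition bounded_clinear :: "('a::complex_inner \<Rightarrow> 'b::complex_inner) \<Rightarrow> bool" where
  "bounded_clinear f \<longleftrightarrow>
     (\<forall>x y. f (x + y) = f x + f y) \<and>
     (\<forall>c x. f (scaleC c x) = scaleC c (f x)) \<and>
     (\<exists>K. \<forall>x. norm (f x) \<le> norm x * K)"

definition adj :: "('a::complex_inner \<Rightarrow> 'a) \<Rightarrow> ('a \<Rightarrow> 'a)" where
  "adj T = (THE S. \<forall>x y. cinner (T x) y = cinner x (S y))"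

definition commutant :: "('a::complex_inner \<Rightarrow> 'a) set \<Rightarrow> ('a \<Rightarrow> 'a) set" where
  "commutant S = {T. bounded_clinear T \<and> (\<forall>X\<in>S. T \<circ> X = X \<circ> T)}"

definition von_neumann_algebra :: "('a::chilbert \<Rightarrow> 'a) set \<Rightarrow> bool" where
  "von_neumann_algebra R \<longleftrightarrow>
     (\<forall>T\<in>R. bounded_clinear T) \<and> id \<in> R \<and>
     (\<forall>S\<in>R. \<forall>T\<in>R. (\<lambda>x. S x + T x) \<in> R) \<and>
     (\<forall>c. \<forall>T\<in>R. (\<lambda>x. scaleC c (T x)) \<in> R) \<and>
     (\<forall>S\<in>R. \<forall>T\<in>R. S \<circ> T \<in> R) \<and>
     (\<forall>T\<in>R. adj T \<in> R) \<and>
     commutant (commutant R) = R"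

definition self_adjoint_part :: "('a::chilbert \<Rightarrow> 'a) set \<Rightarrow> ('a \<Rightarrow> 'a) set" where
  "self_adjoint_part R = {A \<in> R. adj A = A}"

definition projections :: "('a::chilbert \<Rightarrow> 'a) set \<Rightarrow> ('a \<Rightarrow> 'a) set" where
  "projections R = {P \<in> R. P \<circ> P = P \<and> adj P = P}"

definition proj_le :: "('a::chilbert \<Rightarrow> 'a) \<Rightarrow> ('a \<Rightarrow> 'a) \<Rightarrow> bool" where
  "proj_le P Q \<longleftrightarrow> range P \<subseteq> range Q"

text \<open>The meet \<open>P \<and> Q\<close> in the projection lattice is the projection onto
  \<open>range P \<inter> range Q\<close>; hence \<open>R \<le> P \<and> Q\<close> iff \<open>range R \<subseteq> range P \<inter> range Q\<close>.\<close>

definition proj_filter_base :: "('a::chilbert \<Rightarrow> 'a) set \<Rightarrow> ('a \<Rightarrow> 'a) set \<Rightarrow> bool" where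
  "proj_filter_base R B \<longleftrightarrow>
     B \<subseteq> projections R \<and> (\<lambda>x. 0) \<notin> B \<and>
     (\<forall>P\<in>B. \<forall>Q\<in>B. \<exists>S\<in>B. range S \<subseteq> range P \<inter> range Q)"

definition quasipoint :: "('a::chilbert \<Rightarrow> 'a) set \<Rightarrow> ('a \<Rightarrow> 'a) set \<Rightarrow> bool" where
  "quasipoint R B \<longleftrightarrow>
     proj_filter_base R B \<and> (\<forall>C. proj_filter_base R C \<and> B \<subseteq> C \<longrightarrow> C = B)"

definition stone_spectrum :: "('a::chilbert \<Rightarrow> 'a) set \<Rightarrow> ('a \<Rightarrow> 'a) set set" where
  "stone_spectrum R = {B. quasipoint R B}"

definition stone_topology :: "('a::chilbert \<Rightarrow> 'a) set \<Rightarrow> ('a \<Rightarrow> 'a) set topology" where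
  "stone_topology R =
     topology_generated_by {{B \<in> stone_spectrum R. P \<in> B} | P. P \<in> projections R}"

text \<open>A (right-continuous, bounded) spectral family \<open>E\<close> of the bounded operator \<open>A\<close>:
  orthogonal projections, increasing, strongly right-continuous, equal to 0 below some
  \<open>a\<close> and to the identity from some \<open>b\<close> on, with \<open>A = \<integral> \<lambda> dE\<^sub>\<lambda>\<close> as the
  operator-norm limit of Riemann--Stieltjes sums.\<close>

definition is_spectral_family :: "('a::chilbert \<Rightarrow> 'a) \<Rightarrow> (real \<Rightarrow> 'a \<Rightarrow> 'a) \<Rightarrow> bool" where
  "is_spectral_family A E \<longleftrightarrow>
     (\<forall>s. bounded_clinear (E s) \<and> E s \<circ> E s = E s \<and> adj (E s) = E s) \<and>
     (\<forall>s u. s \<le> u \<longrightarrow> proj_le (E s) (E u)) \<and>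
     (\<forall>s x. ((\<lambda>u. E u x) \<longlongrightarrow> E s x) (at_right s)) \<and>
     (\<exists>a b. a < b \<and> (\<forall>s<a. E s = (\<lambda>x. 0)) \<and> (\<forall>s\<ge>b. E s = id) \<and>
       (\<forall>\<epsilon>>0. \<exists>\<delta>>0. \<forall>(n::nat) (l::nat \<Rightarrow> real) (t::nat \<Rightarrow> real).
          l 0 < a \<and> b \<le> l n \<and>
          (\<forall>k\<in>{1..n}. l (k - 1) < l k \<and> l k - l (k - 1) < \<delta> \<and>
                        l (k - 1) \<le> t k \<and> t k \<le> l k) \<longrightarrow>
          (\<forall>x. norm (A x - (\<Sum>k\<in>{1..n}. scaleR (t k) (E (l k) x - E (l (k - 1)) x)))
                 \<le> \<epsilon> * norm x)))"

definition spectral_family :: "('a::chilbert \<Rightarrow> 'a) \<Rightarrow> real \<Rightarrow> 'a \<Rightarrow> 'a" where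
  "spectral_family A = (THE E. is_spectral_family A E)"

definition observable_function ::
    "('a::chilbert \<Rightarrow> 'a) \<Rightarrow> ('a \<Rightarrow> 'a) set \<Rightarrow> real" where
  "observable_function A B = Inf {s. spectral_family A s \<in> B}"

end

theory Submission
  imports Defs
begin

lemma cinner_add_right: "cinner x (y + z) = cinner x y + cinner x z"
  by (metis cinner_commute cinner_add_left complex_cnj_add)

lemma cinner_scaleC_right: "cinner x (scaleC c y) = c * cinner x y"
  by (metis cinner_commute cinner_scaleC_left complex_cnj_cnj complex_cnj_mult)

lemma cinner_zero_left [simp]: "cinner 0 y = 0"
  using cinner_add_left[of 0 0 y] by simp

lemma cinner_zero_right [simp]: "cinner x 0 = 0"
  using cinner_add_right[of x 0 0] by simp

lemma cinner_minus_left: "cinner (- x) y = - cinner x y"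
  using cinner_add_left[of x "-x" y] by (simp add: add_eq_0_iff2)

lemma cinner_minus_right: "cinner x (- y) = - cinner x y"
  using cinner_add_right[of x y "-y"] by (simp add: add_eq_0_iff2)

lemma cinner_diff_left: "cinner (x - y) z = cinner x z - cinner y z"
  using cinner_add_left[of x "-y" z] by (simp add: cinner_minus_left)

lemma cinner_diff_right: "cinner x (y - z) = cinner x y - cinner x z"
  using cinner_add_right[of x y "-z"] by (simp add: cinner_minus_right)

lemma cinner_sum_left: "cinner (\<Sum>i\<in>I. f i) y = (\<Sum>i\<in>I. cinner (f i) y)"
  by (induction I rule: infinite_finite_induct) (auto simp: cinner_add_left)

lemma cinner_sum_right: "cinner y (\<Sum>i\<in>I. f i) = (\<Sum>i\<in>I. cinner y (f i))"
  by (induction I rule: infinite_finite_induct) (auto simp: cinner_add_right)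

lemma scaleC_zero_left [simp]: "scaleC 0 x = 0"
  using scaleC_of_real[of 0 x] by simp

lemma scaleC_zero_right [simp]: "scaleC c 0 = 0"
  using scaleC_add_right[of c 0 0] by simp

lemma scaleC_minus_right: "scaleC c (- x) = - scaleC c x"
  using scaleC_add_right[of c x "-x"] by (simp add: add_eq_0_iff2)

lemma scaleC_diff_right: "scaleC c (x - y) = scaleC c x - scaleC c y"
  using scaleC_add_right[of c x "-y"] by (simp add: scaleC_minus_right)

lemma scaleC_minus_left: "scaleC (- c) x = - scaleC c x"
  using scaleC_add_left[of c "-c" x] by (simp add: add_eq_0_iff2)

lemma scaleC_diff_left: "scaleC (c - d) x = scaleC c x - scaleC d x"
  using scaleC_add_left[of c "-d" x] by (simp add: scaleC_minus_left)

lemma scaleC_one' [simp]: "scaleC 1 x = x" by (rule scaleC_one)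

lemma scaleC_sum_right: "scaleC c (\<Sum>i\<in>I. f i) = (\<Sum>i\<in>I. scaleC c (f i))"
  by (induction I rule: infinite_finite_induct) (auto simp: scaleC_add_right)

lemma cinner_self_real: "cinner x x = complex_of_real (Re (cinner x x))"
  using cinner_self_nonneg[of x] by (simp add: complex_eq_iff)

lemma norm_sq: "(norm x)\<^sup>2 = Re (cinner x x)"
  using cinner_self_nonneg[of x] by (simp add: norm_eq_sqrt_cinner)

lemma cinner_self: "cinner x x = complex_of_real ((norm x)\<^sup>2)"
  using cinner_self_real norm_sq by metis

lemma Re_cinner_self_nonneg: "0 \<le> Re (cinner x x)"
  using cinner_self_nonneg by blast

lemma cinner_commute_Re: "Re (cinner y x) = Re (cinner x y)"
  by (subst cinner_commute) simp

lemma norm_scaleC: "norm (scaleC c x) = cmod c * norm x"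
proof -
  have "cinner (scaleC c x) (scaleC c x) = (c * cnj c) * cinner x x"
    by (simp add: cinner_scaleC_left cinner_scaleC_right)
  also have "\<dots> = complex_of_real ((cmod c)\<^sup>2 * (norm x)\<^sup>2)"
    by (simp only: cinner_self complex_norm_square[symmetric] of_real_mult)
  finally have "complex_of_real ((norm (scaleC c x))\<^sup>2) = complex_of_real (((cmod c) * norm x)\<^sup>2)"
    by (simp only: cinner_self power_mult_distrib)
  then have "(norm (scaleC c x))\<^sup>2 = ((cmod c) * norm x)\<^sup>2"
    using of_real_eq_iff by blast
  then show ?thesis
    by (simp add: power2_eq_iff_nonneg)
qed

section \<open>Generalized Cauchy-Schwarz\<close>

lemma real_quad_lemma:
  fixes a b c :: real
  assumes "0 \<le> a" "0 \<le> b" "0 \<le> c" and q: "\<And>t. 0 \<le> a - 2 * t * b + t\<^sup>2 * b * c"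
  shows "b \<le> a * c"
proof (cases "c > 0")
  case True
  have "0 \<le> a - 2 * (1/c) * b + (1/c)\<^sup>2 * b * c" by (rule q)
  also have "\<dots> = a - b / c" using True by (simp add: power2_eq_square field_simps)
  finally show ?thesis using True by (simp add: field_simps)
next
  case False
  then have c0: "c = 0" using assms by simp
  show ?thesis
  proof (rule ccontr)
    assume "\<not> b \<le> a * c"
    then have "b > 0" using c0 by simp
    have "0 \<le> a - 2 * ((a+1)/(2*b)) * b + ((a+1)/(2*b))\<^sup>2 * b * c" by (rule q)
    then show False using c0 \<open>b > 0\<close> by simp
  qed
qed

lemma gen_CS:
  fixes f :: "'a::complex_inner \<Rightarrow> 'a \<Rightarrow> complex"
  assumes add: "\<And>x y z. f x (y + z) = f x y + f x z"
    and sc: "\<And>x y c. f x (scaleC c y) = c * f x y"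
    and herm: "\<And>x y. f y x = cnj (f x y)"
    and pos: "\<And>x. 0 \<le> Re (f x x)"
  shows "(cmod (f x y))\<^sup>2 \<le> Re (f x x) * Re (f y y)"
proof -
  have addl: "f (u + v) z = f u z + f v z" for u v z
  proof -
    have "f (u + v) z = cnj (f z (u + v))" by (rule herm)
    also have "\<dots> = cnj (f z u) + cnj (f z v)" by (simp only: add complex_cnj_add)
    also have "cnj (f z u) = f u z" by (rule herm[symmetric])
    also have "cnj (f z v) = f v z" by (rule herm[symmetric])
    finally show ?thesis .
  qed
  have scl: "f (scaleC s u) z = cnj s * f u z" for s u z
  proof -
    have "f (scaleC s u) z = cnj (f z (scaleC s u))" by (rule herm)
    also have "\<dots> = cnj s * cnj (f z u)" by (simp only: sc complex_cnj_mult)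
    also have "cnj (f z u) = f u z" by (rule herm[symmetric])
    finally show ?thesis .
  qed
  define w where "w = f x y"
  have fyx: "f y x = cnj w" unfolding w_def by (rule herm)
  have key: "0 \<le> Re (f x x) - 2 * t * (cmod w)\<^sup>2 + t\<^sup>2 * (cmod w)\<^sup>2 * Re (f y y)" for t :: real
  proof -
    define s where "s = - (complex_of_real t * cnj w)"
    have e1: "f (x + scaleC s y) (x + scaleC s y) = f x x + s * w + cnj s * cnj w + cnj s * s * f y y"
    proof -
      have "f (x + scaleC s y) (x + scaleC s y) = f x (x + scaleC s y) + f (scaleC s y) (x + scaleC s y)"
        by (rule addl)
      also have "f x (x + scaleC s y) = f x x + s * w"
        by (simp only: add sc w_def)
      also have "f (scaleC s y) (x + scaleC s y) = cnj s * (f y x + s * f y y)"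
        by (simp add: scl add sc algebra_simps)
      finally show ?thesis by (simp only: fyx ring_distribs mult.assoc add.assoc)
    qed
    have ww: "w * cnj w = complex_of_real ((cmod w)\<^sup>2)"
      by (rule complex_norm_square[symmetric])
    have e2: "s * w = - complex_of_real (t * (cmod w)\<^sup>2)"
      unfolding s_def using ww by (simp add: mult.commute mult.left_commute)
    have e3: "cnj s * cnj w = - complex_of_real (t * (cmod w)\<^sup>2)"
      unfolding s_def using ww by (simp add: mult.commute mult.left_commute)
    have e4: "cnj s * s = complex_of_real (t\<^sup>2 * (cmod w)\<^sup>2)"
      unfolding s_def using ww by (simp add: power2_eq_square mult.commute mult.left_commute)
    have "Re (f (x + scaleC s y) (x + scaleC s y)) =
        Re (f x x) - 2 * t * (cmod w)\<^sup>2 + t\<^sup>2 * (cmod w)\<^sup>2 * Re (f y y)"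
      unfolding e1 e2 e3 e4 by simp
    then show ?thesis using pos by metis
  qed
  have "(cmod w)\<^sup>2 \<le> Re (f x x) * Re (f y y)"
    by (rule real_quad_lemma[OF pos _ pos]) (use key in \<open>auto simp: mult.assoc\<close>)
  then show ?thesis by (simp add: w_def)
qed

lemma CS: "cmod (cinner x y) \<le> norm x * norm y"
proof -
  have "(cmod (cinner x y))\<^sup>2 \<le> Re (cinner x x) * Re (cinner y y)"
    by (rule gen_CS) (auto simp: cinner_add_right cinner_scaleC_right Re_cinner_self_nonneg
        intro: cinner_commute)
  also have "\<dots> = (norm x * norm y)\<^sup>2" by (simp add: norm_sq power_mult_distrib)
  finally show ?thesis by (simp add: power2_le_iff_abs_le)
qed

lemma norm_add_sq: "(norm (x + y))\<^sup>2 = (norm x)\<^sup>2 + (norm y)\<^sup>2 + 2 * Re (cinner x y)"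
  by (simp add: norm_sq cinner_add_left cinner_add_right cinner_commute_Re[of x y])

lemma norm_diff_sq: "(norm (x - y))\<^sup>2 = (norm x)\<^sup>2 + (norm y)\<^sup>2 - 2 * Re (cinner x y)"
  by (simp add: norm_sq cinner_diff_left cinner_diff_right cinner_commute_Re[of x y])

lemma cinner_eq_zero_all: "(\<And>y. cinner x y = 0) \<Longrightarrow> x = 0"
  using cinner_self_eq_zero by blast

lemma cinner_ext: "(\<And>y. cinner x y = cinner x' y) \<Longrightarrow> x = x'"
  using cinner_eq_zero_all[of "x - x'"] by (simp add: cinner_diff_left)

lemma cinner_ext_right: "(\<And>y. cinner y x = cinner y x') \<Longrightarrow> x = x'"
  by (rule cinner_ext) (metis cinner_commute)

lemma scaleC_real: "scaleC (complex_of_real r) x = scaleR r x" by (rule scaleC_of_real)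

lemma cinner_scaleR_left: "cinner (scaleR r x) y = complex_of_real r * cinner x y"
  by (simp add: scaleC_real[symmetric] cinner_scaleC_left)

lemma cinner_scaleR_right: "cinner x (scaleR r y) = complex_of_real r * cinner x y"
  by (simp add: scaleC_real[symmetric] cinner_scaleC_right)

lemma bounded_bilinear_cinner: "bounded_bilinear cinner"
proof
  show "cinner (a + a') b = cinner a b + cinner a' b" for a a' b by (rule cinner_add_left)
  show "cinner a (b + b') = cinner a b + cinner a b'" for a b b' by (rule cinner_add_right)
  show "cinner (scaleR r a) b = scaleR r (cinner a b)" for r a b
    by (simp add: cinner_scaleR_left scaleR_conv_of_real)
  show "cinner a (scaleR r b) = scaleR r (cinner a b)" for r a b
    by (simp add: cinner_scaleR_right scaleR_conv_of_real)
  show "\<exists>K. \<forall>a b. norm (cinner a b) \<le> norm a * norm b * K"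
    by (rule exI[of _ 1]) (simp add: CS)
qed

lemmas tendsto_cinner = bounded_bilinear.tendsto[OF bounded_bilinear_cinner]

section \<open>Bounded complex-linear operators\<close>

context
  fixes T :: "'a::complex_inner \<Rightarrow> 'b::complex_inner"
  assumes T: "bounded_clinear T"
begin

lemma bcl_add: "T (x + y) = T x + T y" using T unfolding bounded_clinear_def by blast
lemma bcl_scaleC: "T (scaleC c x) = scaleC c (T x)" using T unfolding bounded_clinear_def by blast
lemma bcl_bound: "\<exists>K>0. \<forall>x. norm (T x) \<le> norm x * K"
proof -
  obtain K where K: "\<forall>x. norm (T x) \<le> norm x * K" using T unfolding bounded_clinear_def by blast
  have "\<forall>x. norm (T x) \<le> norm x * (\<bar>K\<bar> + 1)"
  proof
    fix x :: 'a
    have "norm x * K \<le> norm x * (\<bar>K\<bar> + 1)" by (rule mult_left_mono) auto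
    then show "norm (T x) \<le> norm x * (\<bar>K\<bar> + 1)" using K by (meson order_trans)
  qed
  then show ?thesis by (intro exI[of _ "\<bar>K\<bar> + 1"]) auto
qed
lemma bcl_scaleR: "T (scaleR r x) = scaleR r (T x)"
  using bcl_scaleC[of "complex_of_real r" x] by (simp add: scaleC_real)
lemma bcl_zero [simp]: "T 0 = 0" using bcl_add[of 0 0] by simp
lemma bcl_minus: "T (- x) = - T x" using bcl_add[of x "-x"] by (simp add: add_eq_0_iff)
lemma bcl_diff: "T (x - y) = T x - T y" using bcl_add[of x "-y"] by (simp add: bcl_minus)
lemma bcl_sum: "T (\<Sum>i\<in>I. f i) = (\<Sum>i\<in>I. T (f i))"
  by (induction I rule: infinite_finite_induct) (auto simp: bcl_add)
lemma bcl_bounded_linear: "bounded_linear T"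
proof -
  obtain K where "\<forall>x. norm (T x) \<le> norm x * K" using bcl_bound by blast
  then show ?thesis by (intro bounded_linear_intro[of _ K]) (auto simp: bcl_add bcl_scaleR)
qed
lemma bcl_tendsto: "(f \<longlongrightarrow> l) F \<Longrightarrow> ((\<lambda>n. T (f n)) \<longlongrightarrow> T l) F"
  by (rule bounded_linear.tendsto[OF bcl_bounded_linear])
lemma bcl_continuous_on: "continuous_on S T"
  by (rule linear_continuous_on[OF bcl_bounded_linear])
end

lemma bcl_intro:
  assumes "\<And>x y. T (x + y) = T x + T y" "\<And>c x. T (scaleC c x) = scaleC c (T x)"
    "\<And>x. norm (T x) \<le> norm x * K"
  shows "bounded_clinear T"
  using assms unfolding bounded_clinear_def by blast

lemma bcl_id: "bounded_clinear (id :: 'a::complex_inner \<Rightarrow> 'a)"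
  by (rule bcl_intro[of _ 1]) auto

lemma bcl_ident: "bounded_clinear (\<lambda>x::'a::complex_inner. x)"
  by (rule bcl_intro[of _ 1]) auto

lemma bcl_zero_op: "bounded_clinear (\<lambda>x::'a::complex_inner. 0::'b::complex_inner)"
  by (rule bcl_intro[of _ 0]) auto

lemma bcl_compose:
  assumes "bounded_clinear S" "bounded_clinear T"
  shows "bounded_clinear (\<lambda>x. S (T x))"
proof -
  obtain K1 where K1: "K1 > 0" "\<forall>x. norm (S x) \<le> norm x * K1" using bcl_bound[OF assms(1)] by blast
  obtain K2 where K2: "K2 > 0" "\<forall>x. norm (T x) \<le> norm x * K2" using bcl_bound[OF assms(2)] by blast
  have "norm (S (T x)) \<le> norm x * (K2 * K1)" for x
  proof -
    have "norm (S (T x)) \<le> norm (T x) * K1" using K1 by blast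
    also have "\<dots> \<le> (norm x * K2) * K1" using K1 K2 by (intro mult_right_mono) auto
    finally show ?thesis by (simp add: mult.assoc)
  qed
  then show ?thesis
    by (intro bcl_intro[of _ "K2 * K1"]) (auto simp: bcl_add[OF assms(1)] bcl_add[OF assms(2)]
        bcl_scaleC[OF assms(1)] bcl_scaleC[OF assms(2)])
qed

lemma bcl_comp: "bounded_clinear S \<Longrightarrow> bounded_clinear T \<Longrightarrow> bounded_clinear (S \<circ> T)"
  using bcl_compose[of S T] by (simp add: comp_def)

lemma bcl_plus:
  assumes "bounded_clinear S" "bounded_clinear T"
  shows "bounded_clinear (\<lambda>x. S x + T x)"
proof -
  obtain K1 where K1: "K1 > 0" "\<forall>x. norm (S x) \<le> norm x * K1" using bcl_bound[OF assms(1)] by blast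
  obtain K2 where K2: "K2 > 0" "\<forall>x. norm (T x) \<le> norm x * K2" using bcl_bound[OF assms(2)] by blast
  have "norm (S x + T x) \<le> norm x * (K1 + K2)" for x
    using norm_triangle_ineq[of "S x" "T x"] K1 K2 by (simp add: distrib_left) (smt (verit))
  then show ?thesis
    by (intro bcl_intro[of _ "K1 + K2"]) (auto simp: bcl_add[OF assms(1)] bcl_add[OF assms(2)]
        bcl_scaleC[OF assms(1)] bcl_scaleC[OF assms(2)] scaleC_add_right)
qed

lemma bcl_scale:
  assumes "bounded_clinear T"
  shows "bounded_clinear (\<lambda>x. scaleC c (T x))"
proof -
  obtain K where K: "K > 0" "\<forall>x. norm (T x) \<le> norm x * K" using bcl_bound[OF assms] by blast
  have "norm (scaleC c (T x)) \<le> norm x * (cmod c * K)" for x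
    using K by (simp add: norm_scaleC) (metis mult.left_commute mult_left_mono norm_ge_zero)
  then show ?thesis
    by (intro bcl_intro[of _ "cmod c * K"]) (auto simp: bcl_add[OF assms] bcl_scaleC[OF assms]
        scaleC_add_right scaleC_scaleC mult.commute)
qed

lemma bcl_minus_op:
  assumes "bounded_clinear S" "bounded_clinear T"
  shows "bounded_clinear (\<lambda>x. S x - T x)"
proof -
  have "bounded_clinear (\<lambda>x. scaleC (-1) (T x))" by (rule bcl_scale[OF assms(2)])
  then have "bounded_clinear (\<lambda>x. - T x)" by (simp add: scaleC_minus_left)
  from bcl_plus[OF assms(1) this] show ?thesis by simp
qed


lemma adj_unique:
  assumes "\<And>x y. cinner (T x) y = cinner x (S y)"
  shows "adj T = S"
  unfolding adj_def
proof (rule the_equality)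
  show "\<forall>x y. cinner (T x) y = cinner x (S y)" using assms by blast
  fix S' assume H: "\<forall>x y. cinner (T x) y = cinner x (S' y)"
  show "S' = S"
  proof
    fix y
    show "S' y = S y" by (rule cinner_ext_right) (metis H assms)
  qed
qed

section \<open>Closed subspaces and the projection theorem\<close>

definition hsubspace :: "'a::complex_inner set \<Rightarrow> bool" where
  "hsubspace M \<longleftrightarrow> 0 \<in> M \<and> (\<forall>x\<in>M. \<forall>y\<in>M. x + y \<in> M) \<and> (\<forall>c. \<forall>x\<in>M. scaleC c x \<in> M)"

lemma hsubspace_0: "hsubspace M \<Longrightarrow> 0 \<in> M" unfolding hsubspace_def by blast
lemma hsubspace_add: "hsubspace M \<Longrightarrow> x \<in> M \<Longrightarrow> y \<in> M \<Longrightarrow> x + y \<in> M"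
  unfolding hsubspace_def by blast
lemma hsubspace_scaleC: "hsubspace M \<Longrightarrow> x \<in> M \<Longrightarrow> scaleC c x \<in> M"
  unfolding hsubspace_def by blast
lemma hsubspace_scaleR: "hsubspace M \<Longrightarrow> x \<in> M \<Longrightarrow> scaleR r x \<in> M"
  using hsubspace_scaleC[of M x "complex_of_real r"] by (simp add: scaleC_real)
lemma hsubspace_minus: "hsubspace M \<Longrightarrow> x \<in> M \<Longrightarrow> - x \<in> M"
  using hsubspace_scaleR[of M x "-1"] by simp
lemma hsubspace_diff: "hsubspace M \<Longrightarrow> x \<in> M \<Longrightarrow> y \<in> M \<Longrightarrow> x - y \<in> M"
  using hsubspace_add[of M x "-y"] hsubspace_minus[of M y] by simp

lemma parallelogram:
  fixes x a b :: "'a::complex_inner"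
  shows "(norm (a - b))\<^sup>2 = 2 * (norm (x - a))\<^sup>2 + 2 * (norm (x - b))\<^sup>2
            - 4 * (norm (x - scaleR (1/2) (a + b)))\<^sup>2"
proof -
  define u where "u = x - a"
  define v where "v = x - b"
  have uv: "u + v = scaleR 2 (x - scaleR (1/2) (a + b))"
    unfolding u_def v_def by (simp add: algebra_simps scaleR_2)
  have "(norm (u + v))\<^sup>2 = 4 * (norm (x - scaleR (1/2) (a + b)))\<^sup>2"
    unfolding uv by (simp add: power_mult_distrib)
  moreover have "u - v = b - a" unfolding u_def v_def by simp
  moreover note norm_add_sq[of u v] norm_diff_sq[of u v]
  ultimately show ?thesis
    by (simp add: norm_minus_commute[of a b] u_def[symmetric] v_def[symmetric])
qed

lemma proj_exists:
  fixes M :: "'a::chilbert set"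
  assumes cl: "closed M" and sub: "hsubspace M"
  shows "\<exists>m\<in>M. \<forall>y\<in>M. cinner y (x - m) = 0"
proof -
  define D where "D = (\<lambda>y. norm (x - y)) ` M"
  have Dne: "D \<noteq> {}" using hsubspace_0[OF sub] unfolding D_def by blast
  have Dbdd: "bdd_below D" unfolding D_def by (rule bdd_belowI[of _ 0]) auto
  define d where "d = Inf D"
  have dle: "d \<le> norm (x - y)" if "y \<in> M" for y
    unfolding d_def by (rule cInf_lower[OF _ Dbdd]) (use that D_def in auto)
  have d0: "0 \<le> d" unfolding d_def by (rule cInf_greatest[OF Dne]) (auto simp: D_def)
  have "\<exists>y\<in>M. norm (x - y) < d + inverse (real (Suc n))" for n
  proof -
    have "Inf D < d + inverse (real (Suc n))" unfolding d_def by simp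
    from cInf_lessD[OF Dne this] show ?thesis unfolding D_def by blast
  qed
  then have "\<forall>n. \<exists>y. y \<in> M \<and> norm (x - y) < d + inverse (real (Suc n))" by blast
  then obtain ys where "\<forall>n. ys n \<in> M \<and> norm (x - ys n) < d + inverse (real (Suc n))"
    using choice[of "\<lambda>n y. y \<in> M \<and> norm (x - y) < d + inverse (real (Suc n))"] by blast
  then have ys: "\<And>n. ys n \<in> M" "\<And>n. norm (x - ys n) < d + inverse (real (Suc n))" by auto
  define eps where "eps = (\<lambda>n::nat. inverse (real (Suc n)))"
  have eps_pos: "0 < eps n" "eps n \<le> 1" for n unfolding eps_def by (auto simp: field_simps)
  have mid: "scaleR (1/2) (a + b) \<in> M" if "a \<in> M" "b \<in> M" for a b
    by (rule hsubspace_scaleR[OF sub hsubspace_add[OF sub that]])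
  have bnd: "(norm (ys n - ys m))\<^sup>2 \<le> (4 * d + 2) * (eps n + eps m)" for n m
  proof -
    have h1: "d \<le> norm (x - scaleR (1/2) (ys n + ys m))" by (rule dle[OF mid[OF ys(1) ys(1)]])
    have h2: "norm (x - ys n) \<le> d + eps n" using ys(2)[of n] unfolding eps_def by simp
    have h3: "norm (x - ys m) \<le> d + eps m" using ys(2)[of m] unfolding eps_def by simp
    have "(norm (x - ys n))\<^sup>2 \<le> (d + eps n)\<^sup>2" using h2 by (intro power_mono) auto
    moreover have "(norm (x - ys m))\<^sup>2 \<le> (d + eps m)\<^sup>2" using h3 by (intro power_mono) auto
    moreover have "d\<^sup>2 \<le> (norm (x - scaleR (1/2) (ys n + ys m)))\<^sup>2" using h1 d0 by (intro power_mono) auto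
    moreover have "(d + eps n)\<^sup>2 \<le> d\<^sup>2 + (2 * d + 1) * eps n"
      using eps_pos[of n] d0 by (simp add: power2_eq_square algebra_simps)
    moreover have "(d + eps m)\<^sup>2 \<le> d\<^sup>2 + (2 * d + 1) * eps m"
      using eps_pos[of m] d0 by (simp add: power2_eq_square algebra_simps)
    ultimately show ?thesis unfolding parallelogram[of "ys n" "ys m" x] by (simp add: algebra_simps)
  qed
  have "Cauchy ys"
  proof (rule metric_CauchyI)
    fix e :: real assume e: "e > 0"
    obtain N :: nat where N: "(8 * d + 4) / e\<^sup>2 < real N" using reals_Archimedean2 by blast
    have "dist (ys m) (ys n) < e" if "m \<ge> N" "n \<ge> N" for m n
    proof -
      have en: "eps n \<le> inverse (real (Suc N))" "eps m \<le> inverse (real (Suc N))"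
        unfolding eps_def using that by (auto simp: field_simps)
      have "(norm (ys m - ys n))\<^sup>2 \<le> (4 * d + 2) * (eps m + eps n)" by (rule bnd)
      also have "\<dots> \<le> (4 * d + 2) * (2 * inverse (real (Suc N)))"
        using en d0 by (intro mult_left_mono) auto
      also have "\<dots> = (8 * d + 4) / real (Suc N)" by (simp add: field_simps)
      also have "\<dots> < e\<^sup>2"
      proof -
        have "(8 * d + 4) < e\<^sup>2 * real N" using N e by (simp add: field_simps)
        also have "\<dots> \<le> e\<^sup>2 * real (Suc N)" using e by (intro mult_left_mono) auto
        finally show ?thesis by (simp add: field_simps)
      qed
      finally have "(norm (ys m - ys n))\<^sup>2 < e\<^sup>2" .
      then show ?thesis using e by (simp add: dist_norm power_less_imp_less_base)
    qed
    then show "\<exists>M. \<forall>m\<ge>M. \<forall>n\<ge>M. dist (ys m) (ys n) < e" by blast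
  qed
  then obtain m where lim: "ys \<longlonglongrightarrow> m" using Cauchy_convergent_iff convergent_def by blast
  have mM: "m \<in> M" using closed_sequentially[OF cl _ lim] ys(1) by blast
  have "norm (x - m) \<le> d"
  proof (rule LIMSEQ_le[of "\<lambda>n. norm (x - ys n)" _ "\<lambda>n. d + inverse (real (Suc n))"])
    show "(\<lambda>n. norm (x - ys n)) \<longlonglongrightarrow> norm (x - m)" by (intro tendsto_intros lim)
    show "(\<lambda>n. d + inverse (real (Suc n))) \<longlonglongrightarrow> d"
      using tendsto_add[OF tendsto_const LIMSEQ_inverse_real_of_nat, of d] by simp
    show "\<exists>N. \<forall>n\<ge>N. norm (x - ys n) \<le> d + inverse (real (Suc n))"
      using ys(2) less_imp_le by blast
  qed
  then have dm: "norm (x - m) = d" using dle[OF mM] by simp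
  have "cinner y (x - m) = 0" if yM: "y \<in> M" for y
  proof -
    define z where "z = x - m"
    define c where "c = cinner y z"
    define ep where "ep = inverse ((norm y)\<^sup>2 + 1)"
    have np: "0 < (norm y)\<^sup>2 + 1" using zero_le_power2[of "norm y"] by linarith
    have ep: "0 < ep" "ep * (norm y)\<^sup>2 < 1" unfolding ep_def using np by (auto simp: field_simps)
    define t where "t = complex_of_real ep * c"
    have "m + scaleC t y \<in> M" using hsubspace_add[OF sub mM hsubspace_scaleC[OF sub yM]] .
    then have "d \<le> norm (x - (m + scaleC t y))" by (rule dle)
    also have "x - (m + scaleC t y) = z - scaleC t y" unfolding z_def by simp
    finally have "d\<^sup>2 \<le> (norm (z - scaleC t y))\<^sup>2" using d0 by (intro power_mono) auto
    also have "\<dots> = d\<^sup>2 + (cmod t * norm y)\<^sup>2 - 2 * Re (cinner z (scaleC t y))"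
      unfolding norm_diff_sq norm_scaleC z_def dm by simp
    also have "cinner z (scaleC t y) = complex_of_real (ep * (cmod c)\<^sup>2)"
    proof -
      have "cinner z y = cnj c" unfolding c_def by (rule cinner_commute)
      then have "cinner z (scaleC t y) = complex_of_real ep * (c * cnj c)"
        by (simp add: cinner_scaleC_right t_def mult.assoc)
      also have "c * cnj c = complex_of_real ((cmod c)\<^sup>2)" by (rule complex_norm_square[symmetric])
      finally show ?thesis by simp
    qed
    also have "cmod t = ep * cmod c" unfolding t_def using ep by (simp add: norm_mult)
    finally have "2 * ep * (cmod c)\<^sup>2 \<le> (ep * cmod c * norm y)\<^sup>2" by simp
    then have "2 * ep * (cmod c)\<^sup>2 \<le> ep * (cmod c)\<^sup>2 * (ep * (norm y)\<^sup>2)"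
      by (simp add: power_mult_distrib power2_eq_square mult_ac)
    also have "\<dots> \<le> ep * (cmod c)\<^sup>2 * 1" using ep by (intro mult_left_mono) auto
    finally have "(cmod c)\<^sup>2 \<le> 0" using ep by (simp add: field_simps)
    then show ?thesis unfolding c_def z_def by simp
  qed
  then show ?thesis using mM by blast
qed

definition proj :: "'a::chilbert set \<Rightarrow> 'a \<Rightarrow> 'a" where
  "proj M x = (SOME m. m \<in> M \<and> (\<forall>y\<in>M. cinner y (x - m) = 0))"

context
  fixes M :: "'a::chilbert set"
  assumes cl: "closed M" and sub: "hsubspace M"
begin

lemma proj_prop: "proj M x \<in> M \<and> (\<forall>y\<in>M. cinner y (x - proj M x) = 0)"
  unfolding proj_def by (rule someI_ex) (use proj_exists[OF cl sub, of x] in blast)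

lemma proj_in: "proj M x \<in> M" using proj_prop by blast
lemma proj_orth: "y \<in> M \<Longrightarrow> cinner y (x - proj M x) = 0" using proj_prop by blast

lemma proj_uniq:
  assumes "m \<in> M" "\<And>y. y \<in> M \<Longrightarrow> cinner y (x - m) = 0"
  shows "proj M x = m"
proof -
  have d: "proj M x - m \<in> M" by (rule hsubspace_diff[OF sub proj_in assms(1)])
  have "cinner (proj M x - m) (proj M x - m) = cinner (proj M x - m) (x - m) - cinner (proj M x - m) (x - proj M x)"
    by (simp add: cinner_diff_right[symmetric])
  also have "\<dots> = 0" using assms(2)[OF d] proj_orth[OF d] by simp
  finally show ?thesis using cinner_self_eq_zero[of "proj M x - m"] by simp
qed

lemma proj_fixed: "m \<in> M \<Longrightarrow> proj M m = m"
  by (rule proj_uniq) auto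

lemma proj_add: "proj M (x + y) = proj M x + proj M y"
proof (rule proj_uniq)
  show "proj M x + proj M y \<in> M" by (rule hsubspace_add[OF sub proj_in proj_in])
  fix z assume z: "z \<in> M"
  have "x + y - (proj M x + proj M y) = (x - proj M x) + (y - proj M y)" by simp
  then show "cinner z (x + y - (proj M x + proj M y)) = 0"
    by (simp only: cinner_add_right proj_orth[OF z]) simp
qed

lemma proj_scaleC: "proj M (scaleC c x) = scaleC c (proj M x)"
proof (rule proj_uniq)
  show "scaleC c (proj M x) \<in> M" by (rule hsubspace_scaleC[OF sub proj_in])
  fix y assume "y \<in> M"
  have "cinner y (scaleC c x - scaleC c (proj M x)) = c * cinner y (x - proj M x)"
    by (simp add: scaleC_diff_right[symmetric] cinner_scaleC_right)
  then show "cinner y (scaleC c x - scaleC c (proj M x)) = 0" using proj_orth[OF \<open>y \<in> M\<close>] by simp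
qed

lemma proj_sa: "cinner (proj M x) y = cinner x (proj M y)"
proof -
  have "cinner (proj M x) y = cinner (proj M x) (proj M y) + cinner (proj M x) (y - proj M y)"
    by (simp add: cinner_diff_right)
  also have "cinner (proj M x) (y - proj M y) = 0" by (rule proj_orth[OF proj_in])
  also have "cinner x (proj M y) = cinner (proj M x) (proj M y) + cinner (x - proj M x) (proj M y)"
    by (simp add: cinner_diff_left)
  moreover have "cinner (x - proj M x) (proj M y) = 0"
    using proj_orth[OF proj_in, of y x] cinner_commute[of "x - proj M x" "proj M y"] by simp
  ultimately show ?thesis by simp
qed

lemma proj_norm: "norm (proj M x) \<le> norm x"
proof -
  have "x = proj M x + (x - proj M x)" by simp
  then have "(norm x)\<^sup>2 = (norm (proj M x))\<^sup>2 + (norm (x - proj M x))\<^sup>2 + 2 * Re (cinner (proj M x) (x - proj M x))"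
    using norm_add_sq[of "proj M x" "x - proj M x"] by simp
  also have "cinner (proj M x) (x - proj M x) = 0" by (rule proj_orth[OF proj_in])
  finally have "(norm (proj M x))\<^sup>2 \<le> (norm x)\<^sup>2" by simp
  then show ?thesis by (simp add: power2_le_iff_abs_le)
qed

lemma proj_bcl: "bounded_clinear (proj M)"
  by (rule bcl_intro[of _ 1]) (auto simp: proj_add proj_scaleC proj_norm)

lemma proj_idem: "proj M \<circ> proj M = proj M"
  by (auto simp: proj_fixed proj_in)

lemma proj_adj: "adj (proj M) = proj M"
  by (rule adj_unique) (rule proj_sa)

lemma proj_range: "range (proj M) = M"
proof
  show "range (proj M) \<subseteq> M" using proj_in by blast
  show "M \<subseteq> range (proj M)"
  proof
    fix m assume "m \<in> M"
    then have "proj M m = m" by (rule proj_fixed)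
    then show "m \<in> range (proj M)" using rangeI[of "proj M" m] by simp
  qed
qed

end

section \<open>Riesz representation and existence of adjoints\<close>

lemma riesz:
  fixes phi :: "'a::chilbert \<Rightarrow> complex"
  assumes add: "\<And>x y. phi (x + y) = phi x + phi y"
    and sc: "\<And>c x. phi (scaleC c x) = c * phi x"
    and bd: "\<And>x. norm (phi x) \<le> norm x * K"
  shows "\<exists>z. \<forall>x. phi x = cinner z x"
proof (cases "\<forall>x. phi x = 0")
  case True then show ?thesis by (intro exI[of _ 0]) simp
next
  case False
  then obtain x0 where x0: "phi x0 \<noteq> 0" by blast
  have bl: "bounded_linear phi"
    by (rule bounded_linear_intro[of _ K]) (auto simp: add bd sc[of "complex_of_real _", simplified scaleC_real] scaleR_conv_of_real)
  define N where "N = {x. phi x = 0}"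
  have clN: "closed N" unfolding N_def
    by (rule closed_Collect_eq) (auto intro: linear_continuous_on bl)
  have p0: "phi 0 = 0" using add[of 0 0] by simp
  have subN: "hsubspace N" unfolding hsubspace_def N_def by (auto simp: add sc p0)
  define w where "w = x0 - proj N x0"
  have wN: "cinner y w = 0" if "y \<in> N" for y unfolding w_def by (rule proj_orth[OF clN subN that])
  have pw: "phi w = phi x0"
  proof -
    have "phi (proj N x0) = 0" using proj_in[OF clN subN, of x0] unfolding N_def by simp
    moreover have "phi w + phi (proj N x0) = phi x0" unfolding w_def add[symmetric] by simp
    ultimately show ?thesis by simp
  qed
  have w0: "w \<noteq> 0" using pw x0 p0 by auto
  have nw: "cinner w w \<noteq> 0" using w0 cinner_self_eq_zero by blast
  define z where "z = scaleC (cnj (phi w) / cnj (cinner w w)) w"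
  have "phi x = cinner z x" for x
  proof -
    have pd: "phi (a - b) = phi a - phi b" for a b using add[of "a - b" b] by simp
    have "scaleC (phi x) w - scaleC (phi w) x \<in> N"
      unfolding N_def by (simp add: pd sc)
    then have "cinner (scaleC (phi x) w - scaleC (phi w) x) w = 0" by (rule wN)
    then have "cinner w (scaleC (phi x) w - scaleC (phi w) x) = 0"
      by (subst cinner_commute) simp
    then have "phi x * cinner w w = phi w * cinner w x"
      by (simp add: cinner_diff_right cinner_scaleC_right)
    then have "phi x = phi w / cinner w w * cinner w x" using nw by (simp add: field_simps)
    then show ?thesis unfolding z_def by (simp add: cinner_scaleC_left)
  qed
  then show ?thesis by blast
qed

lemma adj_exists:
  fixes T :: "'a::chilbert \<Rightarrow> 'a"
  assumes T: "bounded_clinear T"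
  shows "\<exists>S. \<forall>x y. cinner (T x) y = cinner x (S y)"
proof -
  obtain K where K: "K > 0" "\<forall>x. norm (T x) \<le> norm x * K" using bcl_bound[OF T] by blast
  have "\<exists>z. \<forall>x. cinner y (T x) = cinner z x" for y
  proof (rule riesz[of _ "norm y * K"])
    show "cinner y (T (x + x')) = cinner y (T x) + cinner y (T x')" for x x'
      by (simp add: bcl_add[OF T] cinner_add_right)
    show "cinner y (T (scaleC c x)) = c * cinner y (T x)" for c x
      by (simp add: bcl_scaleC[OF T] cinner_scaleC_right)
    show "norm (cinner y (T x)) \<le> norm x * (norm y * K)" for x
    proof -
      have "norm (cinner y (T x)) \<le> norm y * norm (T x)" by (rule CS)
      also have "\<dots> \<le> norm y * (norm x * K)" using K by (intro mult_left_mono) auto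
      finally show ?thesis by (simp add: mult_ac)
    qed
  qed
  then obtain S where "\<forall>y. \<forall>x. cinner y (T x) = cinner (S y) x"
    using choice[of "\<lambda>y z. \<forall>x. cinner y (T x) = cinner z x"] by blast
  then have S: "\<And>y x. cinner y (T x) = cinner (S y) x" by blast
  have "cinner (T x) y = cinner x (S y)" for x y
    using S[of y x] cinner_commute[of "T x" y] cinner_commute[of x "S y"] by simp
  then show ?thesis by blast
qed

lemma adj_prop:
  fixes T :: "'a::chilbert \<Rightarrow> 'a"
  assumes "bounded_clinear T"
  shows "cinner (T x) y = cinner x (adj T y)"
proof -
  obtain S where S: "\<forall>x y. cinner (T x) y = cinner x (S y)" using adj_exists[OF assms] by blast
  then have "adj T = S" by (intro adj_unique) blast
  then show ?thesis using S by simp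
qed

lemma adj_prop2:
  fixes T :: "'a::chilbert \<Rightarrow> 'a"
  assumes "bounded_clinear T"
  shows "cinner (adj T x) y = cinner x (T y)"
  using adj_prop[OF assms, of y x] by (metis cinner_commute)

lemma adj_bcl:
  fixes T :: "'a::chilbert \<Rightarrow> 'a"
  assumes T: "bounded_clinear T"
  shows "bounded_clinear (adj T)"
proof -
  obtain K where K: "K > 0" "\<forall>x. norm (T x) \<le> norm x * K" using bcl_bound[OF T] by blast
  have add: "adj T (x + y) = adj T x + adj T y" for x y
    by (rule cinner_ext_right) (simp add: adj_prop[OF T, symmetric] cinner_add_right)
  have sc: "adj T (scaleC c x) = scaleC c (adj T x)" for c x
    by (rule cinner_ext_right) (simp add: adj_prop[OF T, symmetric] cinner_scaleC_right)
  have "norm (adj T y) \<le> norm y * K" for y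
  proof -
    have "(norm (adj T y))\<^sup>2 = Re (cinner (T (adj T y)) y)"
      by (simp add: norm_sq adj_prop[OF T])
    also have "\<dots> \<le> cmod (cinner (T (adj T y)) y)" by (rule complex_Re_le_cmod)
    also have "\<dots> \<le> norm (T (adj T y)) * norm y" by (rule CS)
    also have "\<dots> \<le> (norm (adj T y) * K) * norm y" using K by (intro mult_right_mono) auto
    finally have "(norm (adj T y))\<^sup>2 \<le> norm (adj T y) * (norm y * K)" by (simp add: mult_ac)
    then show ?thesis
      using K by (cases "norm (adj T y) = 0") (auto simp: power2_eq_square)
  qed
  then show ?thesis by (intro bcl_intro[of _ K]) (auto simp: add sc)
qed

section \<open>Self-adjoint and positive operators\<close>

definition hsa :: "('a::chilbert \<Rightarrow> 'a) \<Rightarrow> bool" where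
  "hsa T \<longleftrightarrow> bounded_clinear T \<and> (\<forall>x y. cinner (T x) y = cinner x (T y))"

definition hpos :: "('a::chilbert \<Rightarrow> 'a) \<Rightarrow> bool" where
  "hpos T \<longleftrightarrow> hsa T \<and> (\<forall>x. 0 \<le> Re (cinner (T x) x))"

lemma hsa_bcl: "hsa T \<Longrightarrow> bounded_clinear T" unfolding hsa_def by blast
lemma hsa_sym: "hsa T \<Longrightarrow> cinner (T x) y = cinner x (T y)" unfolding hsa_def by blast
lemma hpos_hsa: "hpos T \<Longrightarrow> hsa T" unfolding hpos_def by blast
lemma hpos_bcl: "hpos T \<Longrightarrow> bounded_clinear T" unfolding hpos_def hsa_def by blast
lemma hpos_ge: "hpos T \<Longrightarrow> 0 \<le> Re (cinner (T x) x)" unfolding hpos_def by blast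
lemma hposI: "hsa T \<Longrightarrow> (\<And>x. 0 \<le> Re (cinner (T x) x)) \<Longrightarrow> hpos T" unfolding hpos_def by blast

lemma hsaI:
  assumes "bounded_clinear T" "\<And>x y. cinner (T x) y = cinner x (T y)"
  shows "hsa T" using assms unfolding hsa_def by blast

lemma hsa_real: "hsa T \<Longrightarrow> cinner (T x) x = complex_of_real (Re (cinner (T x) x))"
proof -
  assume T: "hsa T"
  have "cinner (T x) x = cnj (cinner (T x) x)"
    using hsa_sym[OF T, of x x] cinner_commute[of x "T x"] by simp
  then show ?thesis by (auto simp: complex_eq_iff)
qed

lemma hsa_Re_sym: "hsa T \<Longrightarrow> Re (cinner x (T x)) = Re (cinner (T x) x)"
  using cinner_commute_Re by blast

lemma hsa_plus: "hsa S \<Longrightarrow> hsa T \<Longrightarrow> hsa (\<lambda>x. S x + T x)"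
  by (rule hsaI) (auto simp: bcl_plus hsa_bcl cinner_add_left cinner_add_right hsa_sym)

lemma hsa_diff: "hsa S \<Longrightarrow> hsa T \<Longrightarrow> hsa (\<lambda>x. S x - T x)"
  by (rule hsaI) (auto simp: bcl_minus_op hsa_bcl cinner_diff_left cinner_diff_right hsa_sym)

lemma hsa_scaleR: "hsa T \<Longrightarrow> hsa (\<lambda>x. scaleR r (T x))"
proof (rule hsaI)
  assume T: "hsa T"
  show "bounded_clinear (\<lambda>x. scaleR r (T x))"
    using bcl_scale[OF hsa_bcl[OF T], of "complex_of_real r"] by (simp add: scaleC_real)
  show "cinner (scaleR r (T x)) y = cinner x (scaleR r (T y))" for x y
    by (simp add: cinner_scaleR_left cinner_scaleR_right hsa_sym[OF T])
qed

lemma hsa_ident: "hsa (\<lambda>x::'a::chilbert. x)" by (rule hsaI) (auto simp: bcl_ident)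
lemma hsa_zero: "hsa (\<lambda>x::'a::chilbert. 0)" by (rule hsaI) (auto simp: bcl_zero_op)

lemma hsa_comp:
  assumes "hsa S" "hsa T" "\<And>x. S (T x) = T (S x)"
  shows "hsa (\<lambda>x. S (T x))"
proof (rule hsaI)
  show "bounded_clinear (\<lambda>x. S (T x))" by (rule bcl_compose[OF hsa_bcl hsa_bcl]) fact+
  show "cinner (S (T x)) y = cinner x (S (T y))" for x y
    by (simp add: hsa_sym[OF assms(1)] hsa_sym[OF assms(2)] assms(3))
qed

lemma hpos_plus: "hpos S \<Longrightarrow> hpos T \<Longrightarrow> hpos (\<lambda>x. S x + T x)"
  by (rule hposI) (auto simp: hsa_plus hpos_hsa cinner_add_left intro: add_nonneg_nonneg hpos_ge)

lemma hpos_scaleR: "hpos T \<Longrightarrow> 0 \<le> r \<Longrightarrow> hpos (\<lambda>x. scaleR r (T x))"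
  by (rule hposI) (auto simp: hsa_scaleR hpos_hsa cinner_scaleR_left intro!: mult_nonneg_nonneg hpos_ge)

lemma hpos_sq_form: "hsa T \<Longrightarrow> Re (cinner (T (T x)) x) = (norm (T x))\<^sup>2"
proof -
  assume T: "hsa T"
  have "cinner (T (T x)) x = cinner (T x) (T x)" by (rule hsa_sym[OF T])
  then show ?thesis by (simp add: norm_sq)
qed

lemma hpos_sq: "hsa T \<Longrightarrow> hpos (\<lambda>x. T (T x))"
  by (rule hposI) (auto simp: hsa_comp hpos_sq_form)

lemma cmod_cinner_self: "cmod (cinner y y) = (norm y)\<^sup>2"
  unfolding cinner_self norm_of_real by simp

lemma hpos_ident: "hpos (\<lambda>x::'a::chilbert. x)"
  by (rule hposI) (auto simp: hsa_ident Re_cinner_self_nonneg)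

lemma hpos_zero: "hpos (\<lambda>x::'a::chilbert. 0)"
  by (rule hposI) (auto simp: hsa_zero)

lemma form_le_norm:
  assumes "\<And>x. norm (T x) \<le> norm x * K"
  shows "Re (cinner (T x) x) \<le> K * (norm x)\<^sup>2"
proof -
  have "Re (cinner (T x) x) \<le> cmod (cinner (T x) x)" by (rule complex_Re_le_cmod)
  also have "\<dots> \<le> norm (T x) * norm x" by (rule CS)
  also have "\<dots> \<le> (norm x * K) * norm x" by (intro mult_right_mono assms) auto
  finally show ?thesis by (simp add: power2_eq_square mult_ac)
qed

lemma abs_form_le_norm:
  assumes "\<And>x. norm (T x) \<le> norm x * K"
  shows "\<bar>Re (cinner (T x) x)\<bar> \<le> K * (norm x)\<^sup>2"
proof -
  have "\<bar>Re (cinner (T x) x)\<bar> \<le> cmod (cinner (T x) x)" by (rule abs_Re_le_cmod)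
  also have "\<dots> \<le> norm (T x) * norm x" by (rule CS)
  also have "\<dots> \<le> (norm x * K) * norm x" by (intro mult_right_mono assms) auto
  finally show ?thesis by (simp add: power2_eq_square mult_ac)
qed

lemma pos_CS:
  assumes T: "hpos T"
  shows "(cmod (cinner (T x) y))\<^sup>2 \<le> Re (cinner (T x) x) * Re (cinner (T y) y)"
proof (rule gen_CS[where f = "\<lambda>x y. cinner (T x) y"])
  show "cinner (T u) (v + w) = cinner (T u) v + cinner (T u) w" for u v w by (rule cinner_add_right)
  show "cinner (T u) (scaleC c v) = c * cinner (T u) v" for u v c by (rule cinner_scaleC_right)
  show "cinner (T v) u = cnj (cinner (T u) v)" for u v
    using hsa_sym[OF hpos_hsa[OF T], of v u] cinner_commute[of v "T u"] by simp
  show "0 \<le> Re (cinner (T u) u)" for u by (rule hpos_ge[OF T])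
qed

lemma cancel_pos: "(a::real) * a \<le> b * a \<Longrightarrow> 0 < a \<Longrightarrow> a \<le> b"
  by (simp add: mult_le_cancel_right)

lemma pos_sq_bound:
  assumes T: "hpos T" and K: "\<And>x. norm (T x) \<le> norm x * K" "0 \<le> K"
  shows "(norm (T x))\<^sup>2 \<le> K * Re (cinner (T x) x)"
proof (cases "T x = 0")
  case True then show ?thesis using K hpos_ge[OF T, of x] by simp
next
  case False
  then have n0: "0 < (norm (T x))\<^sup>2" by simp
  have "((norm (T x))\<^sup>2)\<^sup>2 = (cmod (cinner (T x) (T x)))\<^sup>2"
    by (simp only: cmod_cinner_self)
  also have "\<dots> \<le> Re (cinner (T x) x) * Re (cinner (T (T x)) (T x))" by (rule pos_CS[OF T])
  also have "\<dots> \<le> Re (cinner (T x) x) * (K * (norm (T x))\<^sup>2)"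
    by (intro mult_left_mono form_le_norm K hpos_ge[OF T])
  finally have "(norm (T x))\<^sup>2 * (norm (T x))\<^sup>2 \<le> (K * Re (cinner (T x) x)) * (norm (T x))\<^sup>2"
    by (simp add: power2_eq_square mult_ac)
  from cancel_pos[OF this n0] show ?thesis .
qed

lemma pos_zero:
  assumes T: "hpos T" and z: "Re (cinner (T x) x) = 0"
  shows "T x = 0"
proof -
  obtain K where K: "K > 0" "\<forall>x. norm (T x) \<le> norm x * K" using bcl_bound[OF hpos_bcl[OF T]] by blast
  have "(norm (T x))\<^sup>2 \<le> K * Re (cinner (T x) x)" by (rule pos_sq_bound[OF T]) (use K in auto)
  then show ?thesis using z by simp
qed

lemma pos_norm_bound:
  assumes T: "hpos T" and c: "\<And>x. Re (cinner (T x) x) \<le> c * (norm x)\<^sup>2" "0 \<le> c"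
  shows "norm (T x) \<le> c * norm x"
proof (cases "T x = 0")
  case True then show ?thesis using c by simp
next
  case False
  then have n0: "0 < (norm (T x))\<^sup>2" by simp
  have "((norm (T x))\<^sup>2)\<^sup>2 = (cmod (cinner (T x) (T x)))\<^sup>2"
    by (simp only: cmod_cinner_self)
  also have "\<dots> \<le> Re (cinner (T x) x) * Re (cinner (T (T x)) (T x))" by (rule pos_CS[OF T])
  also have "\<dots> \<le> (c * (norm x)\<^sup>2) * (c * (norm (T x))\<^sup>2)"
    by (intro mult_mono c hpos_ge[OF T]) (use c in auto)
  finally have "(norm (T x))\<^sup>2 * (norm (T x))\<^sup>2 \<le> (c * norm x)\<^sup>2 * (norm (T x))\<^sup>2"
    by (simp add: power2_eq_square mult_ac)
  from cancel_pos[OF this n0] have "(norm (T x))\<^sup>2 \<le> (c * norm x)\<^sup>2" .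
  then show ?thesis using c by (simp add: power2_le_iff_abs_le)
qed

lemma sa_norm_bound:
  assumes D: "hsa D" and c: "\<And>x. \<bar>Re (cinner (D x) x)\<bar> \<le> c * (norm x)\<^sup>2" "0 \<le> c"
  shows "norm (D x) \<le> 3 * c * norm x"
proof -
  define P where "P = (\<lambda>x. D x + scaleR c x)"
  have P: "hpos P"
  proof (rule hposI)
    show "hsa P" unfolding P_def by (rule hsa_plus[OF D hsa_scaleR[OF hsa_ident]])
    fix x
    have "Re (cinner (P x) x) = Re (cinner (D x) x) + c * (norm x)\<^sup>2"
      by (simp add: P_def cinner_add_left cinner_scaleR_left norm_sq)
    then show "0 \<le> Re (cinner (P x) x)" using c(1)[of x] by linarith
  qed
  have "Re (cinner (P x) x) \<le> (2 * c) * (norm x)\<^sup>2" for x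
  proof -
    have "Re (cinner (P x) x) = Re (cinner (D x) x) + c * (norm x)\<^sup>2"
      by (simp add: P_def cinner_add_left cinner_scaleR_left norm_sq)
    then show ?thesis using c(1)[of x] by linarith
  qed
  then have "norm (P x) \<le> (2 * c) * norm x" by (intro pos_norm_bound[OF P]) (use c in auto)
  moreover have "D x = P x - scaleR c x" unfolding P_def by simp
  then have "norm (D x) \<le> norm (P x) + c * norm x"
    using norm_triangle_ineq4[of "P x" "scaleR c x"] c by simp
  ultimately show ?thesis by simp
qed


section \<open>Product of commuting positive operators\<close>

lemma pos_prod:
  assumes S: "hpos S" and T: "hpos T" and comm: "\<And>x. S (T x) = T (S x)"
  shows "hpos (\<lambda>x. S (T x))"
proof (rule hposI)
  show "hsa (\<lambda>x. S (T x))" by (rule hsa_comp[OF hpos_hsa[OF S] hpos_hsa[OF T] comm])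
  have Sb: "bounded_clinear S" and Tb: "bounded_clinear T" using S T by (auto intro: hpos_bcl)
  obtain K where K: "K > 0" "\<And>x. norm (S x) \<le> norm x * K" using bcl_bound[OF Sb] by blast
  define S1 where "S1 = (\<lambda>x. scaleR (1/K) (S x))"
  have S1pos: "hpos S1" unfolding S1_def by (rule hpos_scaleR[OF S]) (use K in auto)
  have S1le: "Re (cinner (S1 x) x) \<le> (norm x)\<^sup>2" for x
  proof -
    have "Re (cinner (S x) x) \<le> K * (norm x)\<^sup>2" by (rule form_le_norm[OF K(2)])
    then show ?thesis unfolding S1_def using K by (simp add: cinner_scaleR_left field_simps)
  qed
  define Sq where "Sq = rec_nat S1 (\<lambda>n F. (\<lambda>x. F x - F (F x)))"
  have Sq0: "Sq 0 = S1" unfolding Sq_def by simp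
  have SqS: "Sq (Suc n) = (\<lambda>x. Sq n x - Sq n (Sq n x))" for n unfolding Sq_def by simp
  have inv: "hpos (Sq n) \<and> hpos (\<lambda>x. x - Sq n x) \<and> (\<forall>x. T (Sq n x) = Sq n (T x))" for n
  proof (induction n)
    case 0
    have "hpos (\<lambda>x. x - S1 x)"
    proof (rule hposI)
      show "hsa (\<lambda>x. x - S1 x)" by (rule hsa_diff[OF hsa_ident hpos_hsa[OF S1pos]])
      show "0 \<le> Re (cinner (x - S1 x) x)" for x
        using S1le[of x] by (simp add: cinner_diff_left norm_sq)
    qed
    moreover have "T (S1 x) = S1 (T x)" for x
      unfolding S1_def by (simp add: bcl_scaleR[OF Tb] comm)
    ultimately show ?case using S1pos Sq0 by simp
  next
    case (Suc n)
    define P where "P = Sq n"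
    have P: "hpos P" "hpos (\<lambda>x. x - P x)" "\<And>x. T (P x) = P (T x)" using Suc unfolding P_def by auto
    have Pb: "bounded_clinear P" by (rule hpos_bcl[OF P(1)])
    have Ps: "hsa P" by (rule hpos_hsa[OF P(1)])
    have SqS': "Sq (Suc n) = (\<lambda>x. P x - P (P x))" unfolding SqS P_def ..
    have h1: "hpos (\<lambda>x. P x - P (P x))"
    proof (rule hposI)
      show "hsa (\<lambda>x. P x - P (P x))" by (rule hsa_diff[OF Ps hsa_comp[OF Ps Ps]]) simp
      fix x
      have "cinner (P x - P (P x)) x = cinner (P x - P (P x)) (P x) + cinner (P (x - P x)) (x - P x)"
        by (simp add: bcl_diff[OF Pb] cinner_diff_left cinner_diff_right)
      then have "Re (cinner (P x - P (P x)) x) =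
          Re (cinner ((P x) - P (P x)) (P x)) + Re (cinner (P (x - P x)) (x - P x))" by simp
      moreover have "0 \<le> Re (cinner ((P x) - P (P x)) (P x))" using hpos_ge[OF P(2), of "P x"] by simp
      moreover have "0 \<le> Re (cinner (P (x - P x)) (x - P x))" by (rule hpos_ge[OF P(1)])
      ultimately show "0 \<le> Re (cinner (P x - P (P x)) x)" by simp
    qed
    have h2: "hpos (\<lambda>x. x - (P x - P (P x)))"
    proof (rule hposI)
      show "hsa (\<lambda>x. x - (P x - P (P x)))"
        by (rule hsa_diff[OF hsa_ident hsa_diff[OF Ps hsa_comp[OF Ps Ps]]]) simp
      fix x
      have "Re (cinner (x - (P x - P (P x))) x) = Re (cinner (x - P x) x) + (norm (P x))\<^sup>2"
        using hpos_sq_form[OF Ps, of x] by (simp add: cinner_diff_left)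
      then show "0 \<le> Re (cinner (x - (P x - P (P x))) x)" using hpos_ge[OF P(2), of x] by simp
    qed
    have h3: "T (P x - P (P x)) = P (T x) - P (P (T x))" for x
      by (simp add: bcl_diff[OF Tb] P(3))
    show ?case unfolding SqS' using h1 h2 h3 by simp
  qed
  have Sqb: "bounded_clinear (Sq n)" for n using inv[of n] by (auto intro: hpos_bcl)
  have sumid: "S1 x = (\<Sum>k<n. Sq k (Sq k x)) + Sq n x" for n x
  proof (induction n)
    case 0 then show ?case by (simp add: Sq0)
  next
    case (Suc n) then show ?case by (simp add: SqS)
  qed
  have formid: "Re (cinner (S1 x) x) = (\<Sum>k<n. (norm (Sq k x))\<^sup>2) + Re (cinner (Sq n x) x)" for n x
  proof -
    have "cinner (S1 x) x = (\<Sum>k<n. cinner (Sq k (Sq k x)) x) + cinner (Sq n x) x"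
      by (subst sumid[of x n]) (simp add: cinner_add_left cinner_sum_left)
    then have "Re (cinner (S1 x) x) = (\<Sum>k<n. Re (cinner (Sq k (Sq k x)) x)) + Re (cinner (Sq n x) x)"
      by simp
    moreover have "Re (cinner (Sq k (Sq k x)) x) = (norm (Sq k x))\<^sup>2" for k
      by (rule hpos_sq_form[OF hpos_hsa]) (use inv in blast)
    ultimately show ?thesis by simp
  qed
  fix x
  have summ: "summable (\<lambda>k. (norm (Sq k x))\<^sup>2)"
  proof (rule summableI_nonneg_bounded)
    show "0 \<le> (norm (Sq k x))\<^sup>2" for k by simp
    show "(\<Sum>k<n. (norm (Sq k x))\<^sup>2) \<le> Re (cinner (S1 x) x)" for n
      using formid[of x n] hpos_ge[of "Sq n" x] inv[of n] by simp
  qed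
  have "(\<lambda>k. (norm (Sq k x))\<^sup>2) \<longlonglongrightarrow> 0" by (rule summable_LIMSEQ_zero[OF summ])
  then have "(\<lambda>k. sqrt ((norm (Sq k x))\<^sup>2)) \<longlonglongrightarrow> sqrt 0" by (rule tendsto_real_sqrt)
  then have "(\<lambda>k. norm (Sq k x)) \<longlonglongrightarrow> 0" by simp
  then have z: "(\<lambda>k. Sq k x) \<longlonglongrightarrow> 0" by (simp add: tendsto_norm_zero_iff)
  have "(\<lambda>n. S1 x - Sq n x) \<longlonglongrightarrow> S1 x - 0" by (intro tendsto_diff tendsto_const z)
  moreover have "S1 x - Sq n x = (\<Sum>k<n. Sq k (Sq k x))" for n
    unfolding diff_eq_eq by (rule sumid)
  ultimately have lim: "(\<lambda>n. \<Sum>k<n. Sq k (Sq k x)) \<longlonglongrightarrow> S1 x" by simp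
  have "(\<lambda>n. Re (cinner (\<Sum>k<n. Sq k (Sq k x)) (T x))) \<longlonglongrightarrow> Re (cinner (S1 x) (T x))"
    by (intro tendsto_Re tendsto_cinner lim tendsto_const)
  moreover have "0 \<le> Re (cinner (\<Sum>k<n. Sq k (Sq k x)) (T x))" for n
  proof -
    have "Re (cinner (\<Sum>k<n. Sq k (Sq k x)) (T x)) = (\<Sum>k<n. Re (cinner (Sq k (Sq k x)) (T x)))"
      by (simp add: cinner_sum_left)
    also have "\<dots> \<ge> 0"
    proof (rule sum_nonneg)
      fix k
      have Pk: "hpos (Sq k)" "\<forall>x. T (Sq k x) = Sq k (T x)" using inv[of k] by auto
      have "cinner (Sq k (Sq k x)) (T x) = cinner (Sq k x) (T (Sq k x))"
        using hsa_sym[OF hpos_hsa[OF Pk(1)], of "Sq k x" "T x"] Pk(2) by simp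
      also have "\<dots> = cinner (T (Sq k x)) (Sq k x)" using hsa_sym[OF hpos_hsa[OF T]] by simp
      finally show "0 \<le> Re (cinner (Sq k (Sq k x)) (T x))" using hpos_ge[OF T, of "Sq k x"] by simp
    qed
    finally show ?thesis .
  qed
  ultimately have "0 \<le> Re (cinner (S1 x) (T x))" by (intro LIMSEQ_le_const) auto
  moreover have "cinner (S1 x) (T x) = complex_of_real (1/K) * cinner (S (T x)) x"
    unfolding S1_def by (simp add: cinner_scaleR_left hsa_sym[OF hpos_hsa[OF T]] comm)
  ultimately show "0 \<le> Re (cinner (S (T x)) x)" using K by (simp add: zero_le_divide_iff)
qed

section \<open>Square roots of positive operators\<close>

lemma bcl_scaleR_op: "bounded_clinear T \<Longrightarrow> bounded_clinear (\<lambda>x. scaleR r (T x))"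
  using bcl_scale[of T "complex_of_real r"] by (simp only: scaleC_real)

lemma half_half: "scaleR (1/2) v + scaleR (1/2) v = (v::'a::real_vector)"
  by (simp add: scaleR_add_left[symmetric])

lemma quarter_facts:
  fixes v w :: "'a::real_vector"
  shows "scaleR (1/4) v + scaleR (1/4) v = scaleR (1/2) v"
    "scaleR (1/4) v + (scaleR (1/4) v + w) = scaleR (1/2) v + w"
    "scaleR (1/2) v + (scaleR (1/2) v + w) = v + w"
    "scaleR (1/8) v + scaleR (1/8) v = scaleR (1/4) v"
    "scaleR (1/8) v + (scaleR (1/8) v + w) = scaleR (1/4) v + w"
  by (simp_all add: scaleR_add_left[symmetric] add.assoc[symmetric])

lemma sqrt_le_one:
  fixes B :: "'a::chilbert \<Rightarrow> 'a"
  assumes B: "hpos B" and Ble: "\<And>x. Re (cinner (B x) x) \<le> (norm x)\<^sup>2"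
  shows "\<exists>R. hpos R \<and> (\<forall>x. R (R x) = B x) \<and>
     (\<forall>T. bounded_clinear T \<and> (\<forall>x. T (B x) = B (T x)) \<longrightarrow> (\<forall>x. T (R x) = R (T x)))"
proof -
  have Bb: "bounded_clinear B" by (rule hpos_bcl[OF B])
  have Bs: "hsa B" by (rule hpos_hsa[OF B])
  define C where "C = rec_nat (\<lambda>x::'a. 0) (\<lambda>n F. (\<lambda>x. F x + scaleR (1/2) (B x - F (F x))))"
  have C0: "C 0 = (\<lambda>x. 0)" unfolding C_def by simp
  have CS: "C (Suc n) = (\<lambda>x. C n x + scaleR (1/2) (B x - C n (C n x)))" for n unfolding C_def by simp
  have Cb: "bounded_clinear (C n)" for n
  proof (induction n)
    case 0 then show ?case by (simp add: C0 bcl_zero_op)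
  next
    case (Suc n)
    have "bounded_clinear (\<lambda>x. B x - C n (C n x))" by (rule bcl_minus_op[OF Bb bcl_compose[OF Suc Suc]])
    then have "bounded_clinear (\<lambda>x. scaleR (1/2) (B x - C n (C n x)))"
      by (rule bcl_scaleR_op)
    then show ?case unfolding CS by (rule bcl_plus[OF Suc])
  qed
  have Ccomm: "T (C n x) = C n (T x)" if T: "bounded_clinear T" "\<And>x. T (B x) = B (T x)" for T n x
  proof (induction n arbitrary: x)
    case 0 then show ?case by (simp add: C0 bcl_zero[OF T(1)])
  next
    case (Suc n)
    show ?case unfolding CS
      by (simp add: bcl_add[OF T(1)] bcl_scaleR[OF T(1)] bcl_diff[OF T(1)] T(2) Suc)
  qed
  have CB: "C n (B x) = B (C n x)" for n x
    by (rule Ccomm[symmetric]) (auto simp: Bb)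
  have CC: "C n (C m x) = C m (C n x)" for n m x
    by (rule Ccomm[symmetric]) (auto simp: Cb CB)
  have Cs: "hsa (C n)" for n
  proof (induction n)
    case 0 then show ?case by (simp add: C0 hsa_zero)
  next
    case (Suc n)
    show ?case unfolding CS
      by (rule hsa_plus[OF Suc hsa_scaleR[OF hsa_diff[OF Bs hsa_comp[OF Suc Suc]]]]) simp
  qed
  have ICpos: "hpos (\<lambda>x. x - C n x)" for n
  proof (cases n)
    case 0 then show ?thesis by (simp add: C0 hpos_ident)
  next
    case (Suc m)
    have s: "hsa (\<lambda>x. x - C m x)" by (rule hsa_diff[OF hsa_ident Cs])
    show ?thesis
    proof (rule hposI)
      show "hsa (\<lambda>x. x - C n x)" by (rule hsa_diff[OF hsa_ident Cs])
      fix x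
      have e: "x - C n x = scaleR (1/2) ((x - C m x) - C m (x - C m x)) + scaleR (1/2) (x - B x)"
        unfolding Suc CS by (simp add: bcl_diff[OF Cb] algebra_simps half_half)
      have "Re (cinner (x - C n x) x) = (1/2) * Re (cinner ((x - C m x) - C m (x - C m x)) x)
             + (1/2) * Re (cinner (x - B x) x)"
        by (subst e) (simp add: cinner_add_left cinner_scaleR_left)
      also have "Re (cinner ((x - C m x) - C m (x - C m x)) x) = (norm (x - C m x))\<^sup>2"
        using hpos_sq_form[OF s, of x] by simp
      also have "Re (cinner (x - B x) x) = (norm x)\<^sup>2 - Re (cinner (B x) x)"
        by (simp add: cinner_diff_left norm_sq)
      finally show "0 \<le> Re (cinner (x - C n x) x)" using Ble[of x] by simp
    qed
  qed
  define D where "D n = (\<lambda>x. C (Suc n) x - C n x)" for n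
  have Dpos: "hpos (D n)" for n
  proof (induction n)
    case 0
    have "D 0 = (\<lambda>x. scaleR (1/2) (B x))" unfolding D_def CS C0 by simp
    then show ?case using hpos_scaleR[OF B, of "1/2"] by simp
  next
    case (Suc n)
    define G where "G = (\<lambda>x. scaleR (1/2) ((x - C (Suc n) x) + (x - C n x)))"
    have Gpos: "hpos G" unfolding G_def by (rule hpos_scaleR[OF hpos_plus[OF ICpos ICpos]]) simp
    have lin: "C k (a + b) = C k a + C k b" "C k (a - b) = C k a - C k b" "C k (scaleR r a) = scaleR r (C k a)"
      for k a b r by (auto simp: bcl_add[OF Cb] bcl_diff[OF Cb] bcl_scaleR[OF Cb])
    have linB: "B (a + b) = B a + B b" "B (a - b) = B a - B b" "B (scaleR r a) = scaleR r (B a)"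
      for a b r by (auto simp: bcl_add[OF Bb] bcl_diff[OF Bb] bcl_scaleR[OF Bb])
    have DG: "D (Suc n) x = D n (G x)" for x
      unfolding D_def G_def CS by (simp add: lin linB CB CC algebra_simps quarter_facts)
    have GD: "D n (G x) = G (D n x)" for x
      unfolding D_def G_def CS by (simp add: lin linB CB CC algebra_simps quarter_facts)
    have "hpos (\<lambda>x. D n (G x))" by (rule pos_prod[OF Suc Gpos GD])
    moreover have "D (Suc n) = (\<lambda>x. D n (G x))" using DG by (rule ext)
    ultimately show ?case by simp
  qed
  have mono: "hpos (\<lambda>x. C m x - C n x)" if "n \<le> m" for n m
    using that
  proof (induction m)
    case 0 then show ?case by (simp add: hpos_zero)
  next
    case (Suc m)
    show ?case
    proof (cases "n = Suc m")
      case True then show ?thesis by (simp add: hpos_zero)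
    next
      case False
      then have nm: "n \<le> m" using Suc.prems by simp
      have "hpos (\<lambda>x. D m x + (C m x - C n x))" by (rule hpos_plus[OF Dpos Suc.IH[OF nm]])
      moreover have "(\<lambda>x. D m x + (C m x - C n x)) = (\<lambda>x. C (Suc m) x - C n x)"
        by (rule ext) (simp add: D_def)
      ultimately show ?thesis by simp
    qed
  qed
  have Cpos: "hpos (C n)" for n using mono[of 0 n] by (simp add: C0)
  have qle: "Re (cinner (C n x) x) \<le> (norm x)\<^sup>2" for n x
    using hpos_ge[OF ICpos[of n], of x] by (simp add: cinner_diff_left norm_sq)
  have Cnorm: "norm (C n x) \<le> norm x" for n x
    using pos_norm_bound[OF Cpos[of n], of 1 x] qle by simp
  have diffle: "(norm (C m x - C n x))\<^sup>2 \<le> Re (cinner (C m x) x) - Re (cinner (C n x) x)"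
    if "n \<le> m" for n m x
  proof -
    have P: "hpos (\<lambda>x. C m x - C n x)" by (rule mono[OF that])
    have f: "Re (cinner (C m y - C n y) y) = Re (cinner (C m y) y) - Re (cinner (C n y) y)" for y
      by (simp add: cinner_diff_left)
    have "Re (cinner (C m y - C n y) y) \<le> 1 * (norm y)\<^sup>2" for y
      using qle[of m y] hpos_ge[OF Cpos[of n], of y] f[of y] by simp
    then have "norm (C m y - C n y) \<le> norm y * 1" for y
      using pos_norm_bound[OF P, of 1 y] by simp
    then have "(norm (C m x - C n x))\<^sup>2 \<le> 1 * Re (cinner (C m x - C n x) x)"
      by (intro pos_sq_bound[OF P]) auto
    then show ?thesis using f[of x] by simp
  qed
  have conv: "convergent (\<lambda>n. C n x)" for x
  proof -
    define q where "q n = Re (cinner (C n x) x)" for n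
    have inc: "incseq q" unfolding incseq_def q_def
    proof (intro allI impI)
      fix n m :: nat assume "n \<le> m"
      then show "Re (cinner (C n x) x) \<le> Re (cinner (C m x) x)"
        using diffle[of n m x] by (smt (verit) zero_le_power2)
    qed
    have qb: "\<forall>i. q i \<le> (norm x)\<^sup>2" using qle q_def by simp
    obtain L where "q \<longlonglongrightarrow> L" using incseq_convergent[OF inc qb] by blast
    then have cq: "Cauchy q" by (rule LIMSEQ_imp_Cauchy)
    have "Cauchy (\<lambda>n. C n x)"
    proof (rule metric_CauchyI)
      fix e :: real assume e: "0 < e"
      then have "0 < e\<^sup>2" by simp
      from metric_CauchyD[OF cq this] obtain N where N: "\<And>m n. m \<ge> N \<Longrightarrow> n \<ge> N \<Longrightarrow> dist (q m) (q n) < e\<^sup>2"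
        by blast
      have "dist (C m x) (C n x) < e" if "m \<ge> N" "n \<ge> N" for m n
      proof -
        have "(norm (C m x - C n x))\<^sup>2 < e\<^sup>2"
        proof (cases "n \<le> m")
          case True
          then show ?thesis using diffle[OF True, of x] N[OF that] unfolding q_def dist_real_def by linarith
        next
          case False
          then have "m \<le> n" by simp
          have "(norm (C m x - C n x))\<^sup>2 = (norm (C n x - C m x))\<^sup>2" by (simp add: norm_minus_commute)
          then show ?thesis using diffle[OF \<open>m \<le> n\<close>, of x] N[OF that]
            unfolding q_def dist_real_def by linarith
        qed
        then show ?thesis using e by (simp add: dist_norm power_less_imp_less_base)
      qed
      then show "\<exists>M. \<forall>m\<ge>M. \<forall>n\<ge>M. dist (C m x) (C n x) < e" by blast
    qed
    then show ?thesis by (simp add: Cauchy_convergent_iff)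
  qed
  define R where "R x = lim (\<lambda>n. C n x)" for x
  have Rlim: "(\<lambda>n. C n x) \<longlonglongrightarrow> R x" for x
    unfolding R_def using conv[of x] by (simp add: convergent_LIMSEQ_iff)
  have Radd: "R (x + y) = R x + R y" for x y
  proof (rule LIMSEQ_unique[OF Rlim])
    have "(\<lambda>n. C n x + C n y) \<longlonglongrightarrow> R x + R y" by (intro tendsto_add Rlim)
    then show "(\<lambda>n. C n (x + y)) \<longlonglongrightarrow> R x + R y" by (simp add: bcl_add[OF Cb])
  qed
  have Rsc: "R (scaleC c x) = scaleC c (R x)" for c x
  proof (rule LIMSEQ_unique[OF Rlim])
    have "(\<lambda>n. scaleC c (C n x)) \<longlonglongrightarrow> scaleC c (R x)"
      by (rule bcl_tendsto[OF bcl_scale[OF bcl_ident] Rlim])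
    then show "(\<lambda>n. C n (scaleC c x)) \<longlonglongrightarrow> scaleC c (R x)" by (simp add: bcl_scaleC[OF Cb])
  qed
  have Rnorm: "norm (R x) \<le> norm x * 1" for x
    using LIMSEQ_le_const2[OF tendsto_norm[OF Rlim[of x]], of "norm x"] Cnorm by simp
  have Rb: "bounded_clinear R" by (rule bcl_intro[OF Radd Rsc Rnorm])
  have Rsym: "cinner (R x) y = cinner x (R y)" for x y
  proof (rule LIMSEQ_unique)
    show "(\<lambda>n. cinner (C n x) y) \<longlonglongrightarrow> cinner (R x) y" by (intro tendsto_cinner Rlim tendsto_const)
    have "(\<lambda>n. cinner x (C n y)) \<longlonglongrightarrow> cinner x (R y)" by (intro tendsto_cinner Rlim tendsto_const)
    then show "(\<lambda>n. cinner (C n x) y) \<longlonglongrightarrow> cinner x (R y)" by (simp add: hsa_sym[OF Cs])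
  qed
  have Rpos: "hpos R"
  proof (rule hposI)
    show "hsa R" by (rule hsaI[OF Rb Rsym])
    fix x
    have "(\<lambda>n. Re (cinner (C n x) x)) \<longlonglongrightarrow> Re (cinner (R x) x)" by (intro tendsto_Re tendsto_cinner Rlim tendsto_const)
    then show "0 \<le> Re (cinner (R x) x)" by (rule LIMSEQ_le_const) (use hpos_ge[OF Cpos] in blast)
  qed
  have Rcomm: "T (R x) = R (T x)" if T: "bounded_clinear T" "\<forall>x. T (B x) = B (T x)" for T x
  proof (rule LIMSEQ_unique)
    show "(\<lambda>n. T (C n x)) \<longlonglongrightarrow> T (R x)" by (rule bcl_tendsto[OF T(1) Rlim])
    have "(\<lambda>n. C n (T x)) \<longlonglongrightarrow> R (T x)" by (rule Rlim)
    then show "(\<lambda>n. T (C n x)) \<longlonglongrightarrow> R (T x)" using Ccomm[OF T(1)] T(2) by simp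
  qed
  have Rsq: "R (R x) = B x" for x
  proof -
    have z: "(\<lambda>n. C n (C n x - R x)) \<longlonglongrightarrow> 0"
    proof (rule Lim_null_comparison)
      show "\<forall>\<^sub>F n in sequentially. norm (C n (C n x - R x)) \<le> norm (C n x - R x)"
        using Cnorm by simp
      have "(\<lambda>n. C n x - R x) \<longlonglongrightarrow> R x - R x" by (intro tendsto_diff Rlim tendsto_const)
      then show "(\<lambda>n. norm (C n x - R x)) \<longlonglongrightarrow> 0" by (simp add: tendsto_norm_zero_iff)
    qed
    have "(\<lambda>n. C n (C n x - R x) + C n (R x)) \<longlonglongrightarrow> 0 + R (R x)" by (intro tendsto_add z Rlim)
    then have a: "(\<lambda>n. C n (C n x)) \<longlonglongrightarrow> R (R x)" by (simp add: bcl_diff[OF Cb])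
    have "(\<lambda>n. C n x + scaleR (1/2) (B x - C n (C n x))) \<longlonglongrightarrow> R x + scaleR (1/2) (B x - R (R x))"
      by (intro tendsto_add tendsto_scaleR tendsto_diff Rlim a tendsto_const)
    then have "(\<lambda>n. C (Suc n) x) \<longlonglongrightarrow> R x + scaleR (1/2) (B x - R (R x))" by (simp add: CS)
    moreover have "(\<lambda>n. C (Suc n) x) \<longlonglongrightarrow> R x" by (rule LIMSEQ_Suc[OF Rlim])
    ultimately have "R x + scaleR (1/2) (B x - R (R x)) = R x" by (rule LIMSEQ_unique)
    then show ?thesis by simp
  qed
  show ?thesis using Rpos Rsq Rcomm by blast
qed

lemma sqrt_exists:
  fixes B :: "'a::chilbert \<Rightarrow> 'a"
  assumes B: "hpos B"
  shows "\<exists>R. hpos R \<and> (\<forall>x. R (R x) = B x) \<and>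
     (\<forall>T. bounded_clinear T \<and> (\<forall>x. T (B x) = B (T x)) \<longrightarrow> (\<forall>x. T (R x) = R (T x)))"
proof -
  have Bb: "bounded_clinear B" by (rule hpos_bcl[OF B])
  obtain K where K: "K > 0" "\<And>x. norm (B x) \<le> norm x * K" using bcl_bound[OF Bb] by blast
  define B1 where "B1 = (\<lambda>x. scaleR (1/K) (B x))"
  have B1: "hpos B1" unfolding B1_def by (rule hpos_scaleR[OF B]) (use K in auto)
  have B1le: "Re (cinner (B1 x) x) \<le> (norm x)\<^sup>2" for x
  proof -
    have "Re (cinner (B x) x) \<le> K * (norm x)\<^sup>2" by (rule form_le_norm[OF K(2)])
    then show ?thesis unfolding B1_def using K by (simp add: cinner_scaleR_left field_simps)
  qed
  obtain R1 where R1: "hpos R1" "\<forall>x. R1 (R1 x) = B1 x"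
    "\<forall>T. bounded_clinear T \<and> (\<forall>x. T (B1 x) = B1 (T x)) \<longrightarrow> (\<forall>x. T (R1 x) = R1 (T x))"
    using sqrt_le_one[OF B1 B1le] by blast
  have R1b: "bounded_clinear R1" by (rule hpos_bcl[OF R1(1)])
  define R where "R = (\<lambda>x. scaleR (sqrt K) (R1 x))"
  have "hpos R" unfolding R_def by (rule hpos_scaleR[OF R1(1)]) (use K in simp)
  moreover have "R (R x) = B x" for x
  proof -
    have "R (R x) = scaleR (sqrt K * sqrt K) (R1 (R1 x))"
      unfolding R_def by (simp add: bcl_scaleR[OF R1b])
    also have "\<dots> = B x" using R1(2) K(1) by (simp add: B1_def)
    finally show ?thesis .
  qed
  moreover have "\<forall>x. T (R x) = R (T x)" if T: "bounded_clinear T" "\<forall>x. T (B x) = B (T x)" for T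
  proof -
    have "\<forall>x. T (B1 x) = B1 (T x)" unfolding B1_def using T by (simp add: bcl_scaleR[OF T(1)])
    then have "\<forall>x. T (R1 x) = R1 (T x)" using R1(3) T(1) by blast
    then show ?thesis unfolding R_def by (simp add: bcl_scaleR[OF T(1)])
  qed
  ultimately show ?thesis by blast
qed

section \<open>Orthogonal projections\<close>

definition hproj :: "('a::chilbert \<Rightarrow> 'a) \<Rightarrow> bool" where
  "hproj P \<longleftrightarrow> hsa P \<and> (\<forall>x. P (P x) = P x)"

lemma hproj_hsa: "hproj P \<Longrightarrow> hsa P" unfolding hproj_def by blast
lemma hproj_bcl: "hproj P \<Longrightarrow> bounded_clinear P" unfolding hproj_def hsa_def by blast
lemma hproj_idem: "hproj P \<Longrightarrow> P (P x) = P x" unfolding hproj_def by blast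
lemma hproj_sym: "hproj P \<Longrightarrow> cinner (P x) y = cinner x (P y)" unfolding hproj_def hsa_def by blast

lemma hproj_proj: "closed M \<Longrightarrow> hsubspace M \<Longrightarrow> hproj (proj M)"
  unfolding hproj_def using proj_idem[of M] proj_bcl[of M] proj_sa[of M]
  by (auto intro!: hsaI simp: fun_eq_iff)

lemma hproj_form: "hproj P \<Longrightarrow> cinner (P x) x = complex_of_real ((norm (P x))\<^sup>2)"
proof -
  assume P: "hproj P"
  have "cinner (P x) x = cinner (P (P x)) x" by (simp add: hproj_idem[OF P])
  also have "\<dots> = cinner (P x) (P x)" by (rule hproj_sym[OF P])
  finally show ?thesis by (simp add: cinner_self)
qed

lemma hproj_range: "hproj P \<Longrightarrow> y \<in> range P \<longleftrightarrow> P y = y"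
proof
  assume P: "hproj P" and "y \<in> range P"
  then obtain x where "y = P x" by blast
  then show "P y = y" using hproj_idem[OF P] by simp
next
  assume "P y = y"
  then show "y \<in> range P" using rangeI[of P y] by simp
qed

lemma hproj_compl: "hproj P \<Longrightarrow> hproj (\<lambda>x. x - P x)"
  unfolding hproj_def
  by (auto intro: hsa_diff hsa_ident simp: bcl_diff[OF hsa_bcl])

lemma hproj_range_closed: "hproj P \<Longrightarrow> closed (range P)"
proof -
  assume P: "hproj P"
  have "range P = {y. P y - y = 0}" using hproj_range[OF P] by auto
  moreover have "closed {y. P y - y = 0}"
    by (rule closed_Collect_eq) (auto intro!: continuous_intros bcl_continuous_on[OF hproj_bcl[OF P]])
  ultimately show ?thesis by simp
qed

lemma hproj_range_sub: assumes P: "hproj P" shows "hsubspace (range P)"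
  unfolding hsubspace_def
  by (auto simp: hproj_range[OF P] bcl_add[OF hproj_bcl[OF P]] bcl_scaleC[OF hproj_bcl[OF P]]
      bcl_zero[OF hproj_bcl[OF P]])

lemma hproj_le_iff:
  assumes P: "hproj P" and Q: "hproj Q"
  shows "range P \<subseteq> range Q \<longleftrightarrow> (\<forall>x. Q (P x) = P x)"
proof
  assume "range P \<subseteq> range Q"
  then show "\<forall>x. Q (P x) = P x" using hproj_range[OF Q] by blast
next
  assume H: "\<forall>x. Q (P x) = P x"
  show "range P \<subseteq> range Q"
  proof
    fix y assume "y \<in> range P"
    then obtain x where "y = P x" by blast
    then show "y \<in> range Q" using H hproj_range[OF Q] by simp
  qed
qed

lemma hproj_le_comm:
  assumes P: "hproj P" and Q: "hproj Q" and le: "range P \<subseteq> range Q"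
  shows "Q (P x) = P x" "P (Q x) = P x"
proof -
  show qp: "Q (P x) = P x" for x using hproj_le_iff[OF P Q] le by blast
  show "P (Q x) = P x"
  proof (rule cinner_ext)
    fix y
    have "cinner (P (Q x)) y = cinner x (Q (P y))" by (simp add: hproj_sym[OF P] hproj_sym[OF Q])
    also have "\<dots> = cinner (P x) y" by (simp add: qp hproj_sym[OF P])
    finally show "cinner (P (Q x)) y = cinner (P x) y" .
  qed
qed

lemma hproj_eq:
  assumes P: "hproj P" and Q: "hproj Q" and r: "range P = range Q"
  shows "P = Q"
proof
  fix x
  have "P x = P (Q x)" using hproj_le_comm(2)[OF P Q, of x] r by simp
  also have "\<dots> = Q x" using hproj_le_comm(1)[OF Q P, of x] r by simp
  finally show "P x = Q x" .
qed

lemma hproj_norm_le: "hproj P \<Longrightarrow> norm (P x) \<le> norm x"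
proof -
  assume P: "hproj P"
  have "(norm (P x))\<^sup>2 = Re (cinner (P x) x)" using hproj_form[OF P, of x] by simp
  also have "\<dots> \<le> norm (P x) * norm x" using CS[of "P x" x] complex_Re_le_cmod by (meson order_trans)
  finally show ?thesis by (cases "P x = 0") (auto simp: power2_eq_square)
qed

lemma hproj_orth: "hproj P \<Longrightarrow> P y = 0 \<Longrightarrow> cinner (P x) y = 0"
  by (simp add: hproj_sym)

section \<open>Invariant subspaces and commutation\<close>

lemma inv_comm:
  fixes S G :: "'a::chilbert \<Rightarrow> 'a"
  assumes G: "hproj G" and S: "bounded_clinear S"
    and inv1: "\<And>x. G (S (G x)) = S (G x)" and inv2: "\<And>x. G (adj S (G x)) = adj S (G x)"
  shows "G (S x) = S (G x)"
proof (rule cinner_ext)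
  fix y
  have "cinner (G (S x)) y = cinner (S x) (G y)" by (rule hproj_sym[OF G])
  also have "\<dots> = cinner x (adj S (G y))" by (rule adj_prop[OF S])
  also have "\<dots> = cinner x (G (adj S (G y)))" by (simp add: inv2)
  also have "\<dots> = cinner (G x) (adj S (G y))" by (simp add: hproj_sym[OF G])
  also have "\<dots> = cinner (S (G x)) (G y)" by (simp add: adj_prop[OF S])
  also have "\<dots> = cinner (G (S (G x))) y" by (simp add: hproj_sym[OF G])
  also have "\<dots> = cinner (S (G x)) y" by (simp add: inv1)
  finally show "cinner (G (S x)) y = cinner (S (G x)) y" .
qed

lemma adj_comm:
  fixes S X :: "'a::chilbert \<Rightarrow> 'a"
  assumes S: "bounded_clinear S" and X: "hsa X" and c: "\<And>x. S (X x) = X (S x)"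
  shows "adj S (X x) = X (adj S x)"
proof (rule cinner_ext)
  fix y
  have "cinner (adj S (X x)) y = cinner (X x) (S y)" by (rule adj_prop2[OF S])
  also have "\<dots> = cinner x (X (S y))" by (rule hsa_sym[OF X])
  also have "\<dots> = cinner x (S (X y))" by (simp add: c)
  also have "\<dots> = cinner (adj S x) (X y)" by (simp add: adj_prop2[OF S])
  also have "\<dots> = cinner (X (adj S x)) y" by (simp add: hsa_sym[OF X])
  finally show "cinner (adj S (X x)) y = cinner (X (adj S x)) y" .
qed

section \<open>Absolute value and the negative spectral projection\<close>

definition absop :: "('a::chilbert \<Rightarrow> 'a) \<Rightarrow> ('a \<Rightarrow> 'a)" where
  "absop T = (SOME B. hpos B \<and> (\<forall>x. B (B x) = T (T x)) \<and>
     (\<forall>S. bounded_clinear S \<and> (\<forall>x. S (T (T x)) = T (T (S x))) \<longrightarrow> (\<forall>x. S (B x) = B (S x))))"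

definition kproj :: "('a::chilbert \<Rightarrow> 'a) \<Rightarrow> ('a \<Rightarrow> 'a)" where
  "kproj T = proj {x. absop T x + T x = 0}"

context
  fixes T :: "'a::chilbert \<Rightarrow> 'a"
  assumes T: "hsa T"
begin

lemma absop_prop: "hpos (absop T) \<and> (\<forall>x. absop T (absop T x) = T (T x)) \<and>
     (\<forall>S. bounded_clinear S \<and> (\<forall>x. S (T (T x)) = T (T (S x))) \<longrightarrow> (\<forall>x. S (absop T x) = absop T (S x)))"
proof -
  have ex: "\<exists>B. hpos B \<and> (\<forall>x. B (B x) = T (T x)) \<and>
     (\<forall>S. bounded_clinear S \<and> (\<forall>x. S (T (T x)) = T (T (S x))) \<longrightarrow> (\<forall>x. S (B x) = B (S x)))"
    using sqrt_exists[OF hpos_sq[OF T]] by simp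
  show ?thesis unfolding absop_def by (rule someI_ex[OF ex])
qed

lemma absop_pos: "hpos (absop T)" using absop_prop by blast
lemma absop_sq: "absop T (absop T x) = T (T x)" using absop_prop by blast
lemma absop_comm: "bounded_clinear S \<Longrightarrow> (\<And>x. S (T x) = T (S x)) \<Longrightarrow> S (absop T x) = absop T (S x)"
  using absop_prop by auto

lemma absop_commT: "T (absop T x) = absop T (T x)"
  by (rule absop_comm[OF hsa_bcl[OF T]]) simp

definition kerB where "kerB = {x. absop T x + T x = 0}"

lemma kerB_closed: "closed kerB"
  unfolding kerB_def
  by (rule closed_Collect_eq) (auto intro!: continuous_intros
      bcl_continuous_on[OF hpos_bcl[OF absop_pos]] bcl_continuous_on[OF hsa_bcl[OF T]])

lemma kerB_sub: "hsubspace kerB"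
  unfolding hsubspace_def kerB_def
  by (auto simp: bcl_add[OF hpos_bcl[OF absop_pos]] bcl_add[OF hsa_bcl[OF T]]
      bcl_scaleC[OF hpos_bcl[OF absop_pos]] bcl_scaleC[OF hsa_bcl[OF T]] algebra_simps
      scaleC_add_right[symmetric] bcl_zero[OF hpos_bcl[OF absop_pos]] bcl_zero[OF hsa_bcl[OF T]])

lemma kproj_hproj: "hproj (kproj T)"
  unfolding kproj_def kerB_def[symmetric] by (rule hproj_proj[OF kerB_closed kerB_sub])

lemma kproj_range: "range (kproj T) = kerB"
  unfolding kproj_def kerB_def[symmetric] by (rule proj_range[OF kerB_closed kerB_sub])

lemma kproj_fix_iff: "kproj T y = y \<longleftrightarrow> absop T y + T y = 0"
  using hproj_range[OF kproj_hproj, of y] kproj_range unfolding kerB_def by auto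

lemma kproj_comm:
  assumes S: "bounded_clinear S" and c: "\<And>x. S (T x) = T (S x)"
  shows "kproj T (S x) = S (kproj T x)"
proof (rule inv_comm[OF kproj_hproj S])
  have Bb: "bounded_clinear (absop T)" by (rule hpos_bcl[OF absop_pos])
  have inv: "kproj T (R (kproj T x)) = R (kproj T x)"
    if R: "bounded_clinear R" "\<And>x. R (T x) = T (R x)" for R x
  proof -
    have k: "absop T (kproj T x) + T (kproj T x) = 0" using kproj_fix_iff hproj_idem[OF kproj_hproj] by blast
    have "absop T (R (kproj T x)) + T (R (kproj T x)) = R (absop T (kproj T x) + T (kproj T x))"
      by (simp add: bcl_add[OF R(1)] absop_comm[OF R(1)] R(2))
    also have "\<dots> = 0" by (simp add: k bcl_zero[OF R(1)])
    finally show ?thesis using kproj_fix_iff by blast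
  qed
  show "kproj T (S (kproj T x)) = S (kproj T x)" for x by (rule inv[OF S c])
  show "kproj T (adj S (kproj T x)) = adj S (kproj T x)" for x
    by (rule inv[OF adj_bcl[OF S] adj_comm[OF S T c]])
qed

lemma kproj_neg: "kproj T y = y \<Longrightarrow> Re (cinner (T y) y) \<le> 0"
proof -
  assume "kproj T y = y"
  then have "T y = - absop T y" using kproj_fix_iff by (simp add: eq_neg_iff_add_eq_0 add.commute)
  then show ?thesis using hpos_ge[OF absop_pos, of y] by (simp add: cinner_minus_left)
qed

lemma kproj_pos_form: "kproj T y = 0 \<Longrightarrow> Re (cinner (T y) y) = Re (cinner (absop T y) y)"
proof -
  assume y: "kproj T y = 0"
  have Bb: "bounded_clinear (absop T)" by (rule hpos_bcl[OF absop_pos])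
  define w where "w = absop T y - T y"
  have "absop T w + T w = absop T (absop T y) - T (T y)"
    unfolding w_def by (simp add: bcl_diff[OF Bb] bcl_diff[OF hsa_bcl[OF T]] absop_commT)
  also have "\<dots> = 0" by (simp add: absop_sq)
  finally have "kproj T w = w" using kproj_fix_iff by blast
  then have "cinner w y = cinner (kproj T w) y" by simp
  also have "\<dots> = cinner w (kproj T y)" by (rule hproj_sym[OF kproj_hproj])
  finally have "cinner w y = 0" using y by simp
  then show ?thesis unfolding w_def by (simp add: cinner_diff_left)
qed

lemma kproj_pos: "kproj T y = 0 \<Longrightarrow> 0 \<le> Re (cinner (T y) y)"
  using kproj_pos_form hpos_ge[OF absop_pos] by simp

lemma kproj_max:
  assumes S: "hsubspace S" and cl: "\<And>x. x \<in> S \<Longrightarrow> kproj T x \<in> S"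
    and neg: "\<And>y. y \<in> S \<Longrightarrow> Re (cinner (T y) y) \<le> 0"
    and y: "y \<in> S"
  shows "kproj T y = y"
proof -
  define E where "E = kproj T"
  have E: "hproj E" unfolding E_def by (rule kproj_hproj)
  define z where "z = y - E y"
  have zS: "z \<in> S" unfolding z_def by (rule hsubspace_diff[OF S y]) (use cl y E_def in blast)
  have Ez: "E z = 0" unfolding z_def by (simp add: bcl_diff[OF hproj_bcl[OF E]] hproj_idem[OF E])
  have "Re (cinner (T z) z) = Re (cinner (absop T z) z)" using kproj_pos_form Ez E_def by blast
  then have "Re (cinner (absop T z) z) = 0"
    using neg[OF zS] hpos_ge[OF absop_pos, of z] by simp
  then have Bz: "absop T z = 0" by (rule pos_zero[OF absop_pos])
  then have "T (T z) = 0" using absop_sq[of z] by (simp add: bcl_zero[OF hpos_bcl[OF absop_pos]])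
  then have "(norm (T z))\<^sup>2 = 0" using hpos_sq_form[OF T, of z] by simp
  then have "T z = 0" by simp
  then have "kproj T z = z" using kproj_fix_iff Bz by simp
  then have "z = 0" using Ez E_def by simp
  then show ?thesis unfolding z_def E_def by simp
qed

end

section \<open>The spectral family\<close>

definition specfam :: "('a::chilbert \<Rightarrow> 'a) \<Rightarrow> real \<Rightarrow> 'a \<Rightarrow> 'a" where
  "specfam A s = kproj (\<lambda>x. A x - scaleR s x)"

lemma le_of_all_gt:
  fixes a s c :: real
  assumes H: "\<And>u. u > s \<Longrightarrow> a \<le> u * c" and c: "0 \<le> c"
  shows "a \<le> s * c"
proof (rule ccontr)
  assume "\<not> a \<le> s * c"
  then have d: "0 < a - s * c" by simp
  define u where "u = s + (a - s * c) / (c + 1)"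
  have "u > s" unfolding u_def using d c by simp
  then have "a \<le> u * c" by (rule H)
  also have "u * c = s * c + (a - s * c) * (c / (c + 1))" unfolding u_def using c by (simp add: field_simps)
  also have "(a - s * c) * (c / (c + 1)) < (a - s * c) * 1"
    using d c by (intro mult_strict_left_mono) (auto simp: field_simps)
  finally show False by simp
qed

context
  fixes A :: "'a::chilbert \<Rightarrow> 'a"
  assumes A: "hsa A"
begin

lemma hsa_shift: "hsa (\<lambda>x. A x - scaleR s x)"
  by (rule hsa_diff[OF A hsa_scaleR[OF hsa_ident]])

lemma sf_hproj: "hproj (specfam A s)"
  unfolding specfam_def by (rule kproj_hproj[OF hsa_shift])

lemma sf_bcl: "bounded_clinear (specfam A s)" by (rule hproj_bcl[OF sf_hproj])

lemma sf_comm: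
  assumes S: "bounded_clinear S" and c: "\<And>x. S (A x) = A (S x)"
  shows "specfam A s (S x) = S (specfam A s x)"
  unfolding specfam_def
  by (rule kproj_comm[OF hsa_shift S]) (simp add: bcl_diff[OF S] bcl_scaleR[OF S] c)

lemma sf_commA: "specfam A s (A x) = A (specfam A s x)"
  by (rule sf_comm[OF hsa_bcl[OF A]]) simp

lemma sf_comm2: "specfam A s (specfam A u x) = specfam A u (specfam A s x)"
  by (rule sf_comm[OF sf_bcl]) (simp add: sf_commA)

lemma sf_upper: "specfam A s y = y \<Longrightarrow> Re (cinner (A y) y) \<le> s * (norm y)\<^sup>2"
  using kproj_neg[OF hsa_shift, of s y] unfolding specfam_def
  by (simp add: cinner_diff_left cinner_scaleR_left norm_sq)

lemma sf_lower: "specfam A s y = 0 \<Longrightarrow> s * (norm y)\<^sup>2 \<le> Re (cinner (A y) y)"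
  using kproj_pos[OF hsa_shift, of s y] unfolding specfam_def
  by (simp add: cinner_diff_left cinner_scaleR_left norm_sq)

lemma sf_mono_fix:
  assumes su: "s \<le> u" and y: "specfam A s y = y"
  shows "specfam A u y = y"
proof -
  have "kproj (\<lambda>x. A x - scaleR u x) y = y"
  proof (rule kproj_max[OF hsa_shift hproj_range_sub[OF sf_hproj[of s]]])
    show "kproj (\<lambda>x. A x - scaleR u x) x \<in> range (specfam A s)" if "x \<in> range (specfam A s)" for x
    proof -
      have "specfam A s x = x" using that hproj_range[OF sf_hproj] by blast
      then have "specfam A s (specfam A u x) = specfam A u x" using sf_comm2[of s u x] by simp
      then show ?thesis unfolding specfam_def[symmetric] using hproj_range[OF sf_hproj] by blast
    qed
    show "Re (cinner (A z - scaleR u z) z) \<le> 0" if "z \<in> range (specfam A s)" for z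
    proof -
      have "specfam A s z = z" using that hproj_range[OF sf_hproj] by blast
      then have "Re (cinner (A z) z) \<le> s * (norm z)\<^sup>2" by (rule sf_upper)
      moreover have "s * (norm z)\<^sup>2 \<le> u * (norm z)\<^sup>2" using su by (intro mult_right_mono) auto
      ultimately show ?thesis by (simp add: cinner_diff_left cinner_scaleR_left norm_sq)
    qed
    show "y \<in> range (specfam A s)" using y hproj_range[OF sf_hproj] by blast
  qed
  then show ?thesis unfolding specfam_def .
qed

lemma sf_mono: "s \<le> u \<Longrightarrow> range (specfam A s) \<subseteq> range (specfam A u)"
  using sf_mono_fix hproj_range[OF sf_hproj] by blast

lemma sf_mono_comm:
  assumes "s \<le> u"
  shows "specfam A u (specfam A s x) = specfam A s x" "specfam A s (specfam A u x) = specfam A s x"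
  using hproj_le_comm[OF sf_hproj sf_hproj sf_mono[OF assms]] by auto

lemma sf_low:
  assumes K: "\<And>x. norm (A x) \<le> norm x * K" and s: "s < - K"
  shows "specfam A s x = 0"
proof -
  define y where "y = specfam A s x"
  have "specfam A s y = y" unfolding y_def by (rule hproj_idem[OF sf_hproj])
  then have u: "Re (cinner (A y) y) \<le> s * (norm y)\<^sup>2" by (rule sf_upper)
  have "\<bar>Re (cinner (A y) y)\<bar> \<le> K * (norm y)\<^sup>2" by (rule abs_form_le_norm[OF K])
  then have "- K * (norm y)\<^sup>2 \<le> s * (norm y)\<^sup>2" using u by linarith
  then have "(- K - s) * (norm y)\<^sup>2 \<le> 0" by (simp add: algebra_simps)
  then have "(norm y)\<^sup>2 \<le> 0" using s by (simp add: mult_le_0_iff)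
  then show ?thesis unfolding y_def[symmetric] by simp
qed

lemma sf_high:
  assumes K: "\<And>x. norm (A x) \<le> norm x * K" and s: "K \<le> s"
  shows "specfam A s x = x"
proof -
  have "kproj (\<lambda>x. A x - scaleR s x) x = x"
  proof (rule kproj_max[OF hsa_shift, of UNIV])
    show "hsubspace (UNIV :: 'a set)" unfolding hsubspace_def by simp
    show "Re (cinner (A z - scaleR s z) z) \<le> 0" for z
    proof -
      have "\<bar>Re (cinner (A z) z)\<bar> \<le> K * (norm z)\<^sup>2" by (rule abs_form_le_norm[OF K])
      moreover have "K * (norm z)\<^sup>2 \<le> s * (norm z)\<^sup>2" using s by (intro mult_right_mono) auto
      ultimately show ?thesis by (simp add: cinner_diff_left cinner_scaleR_left norm_sq)
    qed
  qed auto
  then show ?thesis unfolding specfam_def .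
qed

lemma sf_pyth:
  assumes "s \<le> u"
  shows "(norm (specfam A u x - specfam A s x))\<^sup>2 = (norm (specfam A u x))\<^sup>2 - (norm (specfam A s x))\<^sup>2"
proof -
  define a where "a = specfam A s x"
  define b where "b = specfam A u x - specfam A s x"
  have "cinner a b = cinner x (specfam A s b)" unfolding a_def by (rule hproj_sym[OF sf_hproj])
  also have "specfam A s b = 0" unfolding b_def
    by (simp add: bcl_diff[OF sf_bcl] sf_mono_comm[OF assms] hproj_idem[OF sf_hproj])
  finally have "cinner a b = 0" by simp
  moreover have "specfam A u x = a + b" unfolding a_def b_def by simp
  ultimately show ?thesis using norm_add_sq[of a b] unfolding a_def[symmetric] b_def[symmetric] by simp
qed

lemma sf_rcont: "((\<lambda>u. specfam A u x) \<longlongrightarrow> specfam A s x) (at_right s)"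
proof -
  define E where "E = specfam A"
  define f where "f u = (norm (E u x))\<^sup>2" for u
  define us where "us n = s + inverse (real (Suc n))" for n
  have us_gt: "us n > s" for n unfolding us_def by simp
  have us_dec: "us m \<le> us n" if "n \<le> m" for n m unfolding us_def using that by (simp add: field_simps)
  have fmono: "f v \<le> f u" if "v \<le> u" for u v
    using sf_pyth[OF that, of x] zero_le_power2[of "norm (specfam A u x - specfam A v x)"]
    unfolding f_def E_def by linarith
  have pyth: "(norm (E u x - E v x))\<^sup>2 = f u - f v" if "v \<le> u" for u v
    unfolding f_def E_def by (rule sf_pyth[OF that])
  have "decseq (\<lambda>n. f (us n))" unfolding decseq_def using us_dec fmono by blast
  moreover have "\<forall>i. 0 \<le> f (us i)" unfolding f_def by simp
  ultimately obtain L where "(\<lambda>n. f (us n)) \<longlonglongrightarrow> L" using decseq_convergent by blast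
  then have cf: "Cauchy (\<lambda>n. f (us n))" by (rule LIMSEQ_imp_Cauchy)
  have "Cauchy (\<lambda>n. E (us n) x)"
  proof (rule metric_CauchyI)
    fix e :: real assume e: "0 < e"
    then have "0 < e\<^sup>2" by simp
    from metric_CauchyD[OF cf this] obtain N where
      N: "\<And>m n. m \<ge> N \<Longrightarrow> n \<ge> N \<Longrightarrow> dist (f (us m)) (f (us n)) < e\<^sup>2" by blast
    have "dist (E (us m) x) (E (us n) x) < e" if "m \<ge> N" "n \<ge> N" for m n
    proof -
      have "(norm (E (us m) x - E (us n) x))\<^sup>2 < e\<^sup>2"
      proof (cases "n \<le> m")
        case True
        have "(norm (E (us n) x - E (us m) x))\<^sup>2 = f (us n) - f (us m)" by (rule pyth[OF us_dec[OF True]])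
        moreover have "(norm (E (us m) x - E (us n) x))\<^sup>2 = (norm (E (us n) x - E (us m) x))\<^sup>2"
          by (simp add: norm_minus_commute)
        ultimately show ?thesis using N[OF that] unfolding dist_real_def by linarith
      next
        case False
        then have "m \<le> n" by simp
        have "(norm (E (us m) x - E (us n) x))\<^sup>2 = f (us m) - f (us n)" by (rule pyth[OF us_dec[OF \<open>m \<le> n\<close>]])
        then show ?thesis using N[OF that] unfolding dist_real_def by linarith
      qed
      then show ?thesis using e by (simp add: dist_norm power_less_imp_less_base)
    qed
    then show "\<exists>M. \<forall>m\<ge>M. \<forall>n\<ge>M. dist (E (us m) x) (E (us n) x) < e" by blast
  qed
  then obtain z where zlim: "(\<lambda>n. E (us n) x) \<longlonglongrightarrow> z"
    using Cauchy_convergent_iff convergent_def by blast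
  have Eb: "bounded_clinear (E u)" for u unfolding E_def by (rule sf_bcl)
  have zfix: "E (us m) z = z" for m
  proof (rule LIMSEQ_unique)
    show "(\<lambda>n. E (us m) (E (us n) x)) \<longlonglongrightarrow> E (us m) z" by (rule bcl_tendsto[OF Eb zlim])
    have "\<forall>\<^sub>F n in sequentially. E (us n) x = E (us m) (E (us n) x)"
      unfolding eventually_sequentially
    proof (intro exI[of _ m] allI impI)
      fix n assume "m \<le> n"
      show "E (us n) x = E (us m) (E (us n) x)"
        using sf_mono_comm(1)[OF us_dec[OF \<open>m \<le> n\<close>], of x] unfolding E_def by simp
    qed
    then show "(\<lambda>n. E (us m) (E (us n) x)) \<longlonglongrightarrow> z" by (rule Lim_transform_eventually[OF zlim])
  qed
  define M where "M = {y. \<forall>u>s. E u y = y}"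
  have zM: "z \<in> M" unfolding M_def
  proof (intro CollectI allI impI)
    fix u assume "u > s"
    then obtain m where "inverse (real (Suc m)) < u - s" using reals_Archimedean[of "u - s"] by auto
    then have "us m \<le> u" unfolding us_def by simp
    then have "E u (E (us m) z) = E (us m) z" unfolding E_def by (rule sf_mono_comm(1))
    then show "E u z = z" using zfix by simp
  qed
  have "kproj (\<lambda>x. A x - scaleR s x) z = z"
  proof (rule kproj_max[OF hsa_shift _ _ _ zM])
    show "hsubspace M" unfolding hsubspace_def M_def
      by (auto simp: bcl_add[OF sf_bcl] bcl_scaleC[OF sf_bcl] bcl_zero[OF sf_bcl] E_def)
    show "kproj (\<lambda>x. A x - scaleR s x) y \<in> M" if "y \<in> M" for y
    proof -
      have "\<forall>u>s. E u (E s y) = E s y"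
      proof (intro allI impI)
        fix u assume "u > s"
        then have "E u y = y" using that unfolding M_def by auto
        then show "E u (E s y) = E s y" using sf_comm2[of u s y] unfolding E_def by simp
      qed
      then show ?thesis unfolding M_def specfam_def[symmetric] E_def by simp
    qed
    show "Re (cinner (A y - scaleR s y) y) \<le> 0" if "y \<in> M" for y
    proof -
      have "Re (cinner (A y) y) \<le> s * (norm y)\<^sup>2"
        by (rule le_of_all_gt) (use that sf_upper in \<open>auto simp: M_def E_def\<close>)
      then show ?thesis by (simp add: cinner_diff_left cinner_scaleR_left norm_sq)
    qed
  qed
  then have Esz: "E s z = z" unfolding E_def specfam_def .
  have "(\<lambda>n. E s (E (us n) x)) \<longlonglongrightarrow> E s z" by (rule bcl_tendsto[OF Eb zlim])
  moreover have "E s (E (us n) x) = E s x" for n unfolding E_def by (rule sf_mono_comm(2)) (use us_gt in \<open>simp add: less_imp_le\<close>)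
  ultimately have "E s z = E s x" by (simp add: LIMSEQ_const_iff)
  then have zE: "z = E s x" using Esz by simp
  show ?thesis unfolding tendsto_iff
  proof (intro allI impI)
    fix e :: real assume e: "0 < e"
    have "(\<lambda>n. E (us n) x) \<longlonglongrightarrow> E s x" using zlim zE by simp
    then obtain N where "\<forall>n\<ge>N. norm (E (us n) x - E s x) < e" using LIMSEQ_D[OF _ e] by blast
    then have n: "dist (E (us N) x) (E s x) < e" by (simp add: dist_norm)
    define n where "n = N"
    show "\<forall>\<^sub>F u in at_right s. dist (specfam A u x) (specfam A s x) < e"
      unfolding eventually_at_right_field
    proof (intro exI[of _ "us n"] conjI allI impI)
      show "s < us n" by (rule us_gt)
      fix u assume u: "s < u" "u < us n"
      have "(norm (E u x - E s x))\<^sup>2 = f u - f s" by (rule pyth) (use u in simp)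
      also have "\<dots> \<le> f (us n) - f s" using fmono[of u "us n"] u by simp
      also have "\<dots> = (norm (E (us n) x - E s x))\<^sup>2" by (rule pyth[symmetric]) (use us_gt less_imp_le in blast)
      also have "\<dots> < e\<^sup>2" using n unfolding n_def by (simp add: dist_norm power_strict_mono)
      finally show "dist (specfam A u x) (specfam A s x) < e"
        using e unfolding E_def by (simp add: dist_norm power_less_imp_less_base)
    qed
  qed
qed

end

lemma pyth_sum:
  fixes v :: "'i \<Rightarrow> 'a::chilbert"
  assumes "finite I" and "\<And>j k. j \<in> I \<Longrightarrow> k \<in> I \<Longrightarrow> j \<noteq> k \<Longrightarrow> cinner (v j) (v k) = 0"
  shows "(norm (\<Sum>k\<in>I. v k))\<^sup>2 = (\<Sum>k\<in>I. (norm (v k))\<^sup>2)"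
  using assms
proof (induction I rule: finite_induct)
  case empty then show ?case by simp
next
  case (insert a F)
  have "cinner (v a) (\<Sum>k\<in>F. v k) = (\<Sum>k\<in>F. cinner (v a) (v k))" by (rule cinner_sum_right)
  also have "\<dots> = 0" using insert.prems insert.hyps by (intro sum.neutral) auto
  finally have o: "cinner (v a) (\<Sum>k\<in>F. v k) = 0" .
  have "(norm (\<Sum>k\<in>insert a F. v k))\<^sup>2 = (norm (v a + (\<Sum>k\<in>F. v k)))\<^sup>2"
    using insert.hyps by simp
  also have "\<dots> = (norm (v a))\<^sup>2 + (norm (\<Sum>k\<in>F. v k))\<^sup>2" using norm_add_sq[of "v a"] o by simp
  also have "(norm (\<Sum>k\<in>F. v k))\<^sup>2 = (\<Sum>k\<in>F. (norm (v k))\<^sup>2)"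
    using insert.IH insert.prems by blast
  finally show ?case using insert.hyps by simp
qed

lemma telescope_1n:
  fixes f :: "nat \<Rightarrow> 'a::ab_group_add"
  shows "(\<Sum>k\<in>{1..n}. f k - f (k - 1)) = f n - f 0"
proof (induction n)
  case 0 then show ?case by simp
next
  case (Suc n)
  have "{1..Suc n} = insert (Suc n) {1..n}" by auto
  then have "(\<Sum>k\<in>{1..Suc n}. f k - f (k - 1)) = (f (Suc n) - f n) + (\<Sum>k\<in>{1..n}. f k - f (k - 1))"
    by simp
  then show ?case using Suc by simp
qed

context
  fixes A :: "'a::chilbert \<Rightarrow> 'a" and K :: real
  assumes A: "hsa A" and K: "\<And>x. norm (A x) \<le> norm x * K" "0 < K"
begin

lemma riemann_estimate:
  fixes n :: nat and l t :: "nat \<Rightarrow> real" and \<epsilon> :: real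
  assumes eps: "0 < \<epsilon>" and l0: "l 0 < - K - 1" and ln: "K \<le> l n"
    and part: "\<forall>k\<in>{1..n}. l (k - 1) < l k \<and> l k - l (k - 1) < \<epsilon> / 3 \<and> l (k - 1) \<le> t k \<and> t k \<le> l k"
  shows "norm (A x - (\<Sum>k\<in>{1..n}. scaleR (t k) (specfam A (l k) x - specfam A (l (k - 1)) x)))
           \<le> \<epsilon> * norm x"
proof -
  define E where "E = specfam A"
  define D where "D k z = E (l k) z - E (l (k - 1)) z" for k z
  have Eb: "bounded_clinear (E s)" for s unfolding E_def by (rule sf_bcl[OF A])
  have lmono: "l i \<le> l j" if "i \<le> j" "j \<le> n" for i j
    using that
  proof (induction j)
    case 0 then show ?case by simp
  next
    case (Suc j)
    show ?case
    proof (cases "i = Suc j")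
      case True then show ?thesis by simp
    next
      case False
      then have "i \<le> j" using Suc.prems by simp
      then have "l i \<le> l j" using Suc by simp
      moreover have "l j < l (Suc j)" using part Suc.prems by (metis atLeastAtMost_iff diff_Suc_1 le_add1 plus_1_eq_Suc)
      ultimately show ?thesis by simp
    qed
  qed
  have kk: "l (k - 1) \<le> l k" if "k \<in> {1..n}" for k using part that by (auto intro: less_imp_le)
  have Dlow: "E (l (k - 1)) (D k z) = 0" if "k \<in> {1..n}" for k z
    unfolding D_def E_def using sf_mono_comm(2)[OF A kk[OF that]]
    by (simp add: bcl_diff[OF sf_bcl[OF A]] hproj_idem[OF sf_hproj[OF A]])
  have Dhigh: "E (l k) (D k z) = D k z" if "k \<in> {1..n}" for k z
    unfolding D_def E_def using sf_mono_comm(1)[OF A kk[OF that]]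
    by (simp add: bcl_diff[OF sf_bcl[OF A]] hproj_idem[OF sf_hproj[OF A]])
  have Didem: "D k (D k z) = D k z" if "k \<in> {1..n}" for k z
    using Dlow[OF that] Dhigh[OF that] by (simp add: D_def)
  have Dsa: "hsa (D k)" for k unfolding D_def E_def by (rule hsa_diff[OF hproj_hsa hproj_hsa]; rule sf_hproj[OF A])
  have Dproj: "hproj (D k)" if "k \<in> {1..n}" for k unfolding hproj_def using Dsa Didem[OF that] by blast
  have Db: "bounded_clinear (D k)" for k by (rule hsa_bcl[OF Dsa])
  have DA: "D k (A z) = A (D k z)" for k z
    unfolding D_def E_def by (simp add: sf_commA[OF A] bcl_diff[OF hsa_bcl[OF A]])
  have orth: "cinner (D j z) (D k w) = 0" if "j \<in> {1..n}" "k \<in> {1..n}" "j < k" for j k z w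
  proof -
    have "l j \<le> l (k - 1)" using that by (intro lmono) auto
    then have "E (l (k - 1)) (D j z) = D j z"
      using Dhigh[OF that(1), of z] sf_mono_comm(1)[OF A, of "l j" "l (k - 1)" "D j z"] unfolding E_def by simp
    then have "cinner (D j z) (D k w) = cinner (E (l (k - 1)) (D j z)) (D k w)" by simp
    also have "\<dots> = cinner (D j z) (E (l (k - 1)) (D k w))" unfolding E_def by (rule hproj_sym[OF sf_hproj[OF A]])
    also have "\<dots> = 0" using Dlow[OF that(2)] by simp
    finally show ?thesis .
  qed
  have orth2: "cinner (D j z) (D k w) = 0" if "j \<in> {1..n}" "k \<in> {1..n}" "j \<noteq> k" for j k z w
  proof (cases "j < k")
    case True then show ?thesis using orth that by blast
  next
    case False
    then have "k < j" using that by simp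
    then have "cinner (D k w) (D j z) = 0" using orth that by blast
    then show ?thesis by (subst cinner_commute) simp
  qed
  have ident: "E (l n) x = x" unfolding E_def by (rule sf_high[OF A K(1) ln])
  have zero: "E (l 0) x = 0" unfolding E_def by (rule sf_low[OF A K(1)]) (use l0 in simp)
  have sumD: "(\<Sum>k\<in>{1..n}. D k x) = x"
    unfolding D_def using telescope_1n[of "\<lambda>k. E (l k) x" n] ident zero by simp
  define v where "v k = A (D k x) - scaleR (t k) (D k x)" for k
  have eqv: "A x - (\<Sum>k\<in>{1..n}. scaleR (t k) (D k x)) = (\<Sum>k\<in>{1..n}. v k)"
  proof -
    have "A x = (\<Sum>k\<in>{1..n}. A (D k x))" using sumD bcl_sum[OF hsa_bcl[OF A]] by metis
    then show ?thesis unfolding v_def by (simp add: sum_subtractf)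
  qed
  have vD: "D k (v k) = v k" if "k \<in> {1..n}" for k
    unfolding v_def by (simp add: bcl_diff[OF Db] bcl_scaleR[OF Db] DA Didem[OF that])
  have vorth: "cinner (v j) (v k) = 0" if "j \<in> {1..n}" "k \<in> {1..n}" "j \<noteq> k" for j k
    using orth2[OF that, of "v j" "v k"] vD that by simp
  have vbound: "norm (v k) \<le> \<epsilon> * norm (D k x)" if k: "k \<in> {1..n}" for k
  proof -
    define G where "G z = A (D k z) - scaleR (t k) (D k z)" for z
    have Gsa: "hsa G" unfolding G_def
      by (rule hsa_diff[OF hsa_comp[OF A Dsa] hsa_scaleR[OF Dsa]]) (simp add: DA)
    have "\<bar>Re (cinner (G z) z)\<bar> \<le> (\<epsilon> / 3) * (norm z)\<^sup>2" for z
    proof -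
      define w where "w = D k z"
      have "cinner (G z) z = cinner (G (D k z)) z" unfolding G_def
        by (simp add: Didem[OF k])
      also have "\<dots> = cinner (D k (G z)) z" unfolding G_def
        by (simp add: bcl_diff[OF Db] bcl_scaleR[OF Db] DA Didem[OF k])
      also have "\<dots> = cinner (G z) w" unfolding w_def by (rule hsa_sym[OF Dsa])
      finally have c1: "cinner (G z) z = cinner (G z) w" .
      have c2: "G z = A w - scaleR (t k) w" unfolding G_def w_def ..
      have gz: "Re (cinner (G z) z) = Re (cinner (A w) w) - t k * (norm w)\<^sup>2"
      proof -
        have "Re (cinner (G z) z) = Re (cinner (G z) w)" by (simp only: c1)
        then show ?thesis by (simp add: c2 cinner_diff_left cinner_scaleR_left norm_sq)
      qed
      have up: "Re (cinner (A w) w) \<le> l k * (norm w)\<^sup>2"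
        by (rule sf_upper[OF A]) (use Dhigh[OF k] in \<open>simp add: w_def E_def\<close>)
      have lo: "l (k - 1) * (norm w)\<^sup>2 \<le> Re (cinner (A w) w)"
        by (rule sf_lower[OF A]) (use Dlow[OF k] in \<open>simp add: w_def E_def\<close>)
      have p: "l (k - 1) \<le> t k" "t k \<le> l k" "l k - l (k - 1) < \<epsilon> / 3" using part k by auto
      have "(l k - t k) * (norm w)\<^sup>2 \<le> (\<epsilon> / 3) * (norm w)\<^sup>2" using p by (intro mult_right_mono) auto
      moreover have "(t k - l (k - 1)) * (norm w)\<^sup>2 \<le> (\<epsilon> / 3) * (norm w)\<^sup>2" using p by (intro mult_right_mono) auto
      ultimately have "\<bar>Re (cinner (G z) z)\<bar> \<le> (\<epsilon> / 3) * (norm w)\<^sup>2"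
        using gz up lo by (simp add: algebra_simps abs_le_iff)
      also have "\<dots> \<le> (\<epsilon> / 3) * (norm z)\<^sup>2"
        using hproj_norm_le[OF Dproj[OF k], of z] eps unfolding w_def
        by (intro mult_left_mono power_mono) auto
      finally show ?thesis .
    qed
    then have "norm (G z) \<le> 3 * (\<epsilon> / 3) * norm z" for z by (intro sa_norm_bound[OF Gsa]) (use eps in auto)
    then have "norm (G (D k x)) \<le> \<epsilon> * norm (D k x)" by simp
    moreover have "G (D k x) = v k" unfolding G_def v_def by (simp add: Didem[OF k])
    ultimately show ?thesis by simp
  qed
  have "(norm (\<Sum>k\<in>{1..n}. v k))\<^sup>2 = (\<Sum>k\<in>{1..n}. (norm (v k))\<^sup>2)" by (rule pyth_sum) (auto intro: vorth)
  also have "\<dots> \<le> (\<Sum>k\<in>{1..n}. \<epsilon>\<^sup>2 * (norm (D k x))\<^sup>2)"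
  proof (rule sum_mono)
    fix k assume k: "k \<in> {1..n}"
    have "(norm (v k))\<^sup>2 \<le> (\<epsilon> * norm (D k x))\<^sup>2" by (rule power_mono[OF vbound[OF k]]) simp
    then show "(norm (v k))\<^sup>2 \<le> \<epsilon>\<^sup>2 * (norm (D k x))\<^sup>2" by (simp add: power_mult_distrib)
  qed
  also have "\<dots> = \<epsilon>\<^sup>2 * (\<Sum>k\<in>{1..n}. (norm (D k x))\<^sup>2)" by (simp add: sum_distrib_left)
  also have "(\<Sum>k\<in>{1..n}. (norm (D k x))\<^sup>2) = (norm x)\<^sup>2"
    using pyth_sum[of "{1..n}" "\<lambda>k. D k x"] orth2 sumD by simp
  finally have "(norm (\<Sum>k\<in>{1..n}. v k))\<^sup>2 \<le> (\<epsilon> * norm x)\<^sup>2" by (simp add: power_mult_distrib)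
  then have "norm (\<Sum>k\<in>{1..n}. v k) \<le> \<epsilon> * norm x" using eps by (simp add: power2_le_iff_abs_le)
  then show ?thesis using eqv unfolding D_def E_def by simp
qed

end


lemma sf_is_spectral_family:
  fixes A :: "'a::chilbert \<Rightarrow> 'a"
  assumes A: "hsa A"
  shows "is_spectral_family A (specfam A)"
proof -
  obtain K where K: "K > 0" "\<And>x. norm (A x) \<le> norm x * K" using bcl_bound[OF hsa_bcl[OF A]] by blast
  have c1: "\<forall>s. bounded_clinear (specfam A s) \<and> specfam A s \<circ> specfam A s = specfam A s \<and>
      adj (specfam A s) = specfam A s"
  proof
    fix s
    show "bounded_clinear (specfam A s) \<and> specfam A s \<circ> specfam A s = specfam A s \<and>
      adj (specfam A s) = specfam A s"
      using sf_bcl[OF A, of s] hproj_idem[OF sf_hproj[OF A, of s]]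
        adj_unique[of "specfam A s" "specfam A s", OF hproj_sym[OF sf_hproj[OF A]]]
      by (auto simp: fun_eq_iff)
  qed
  have c2: "\<forall>s u. s \<le> u \<longrightarrow> proj_le (specfam A s) (specfam A u)"
    unfolding proj_le_def using sf_mono[OF A] by blast
  have c3: "\<forall>s x. ((\<lambda>u. specfam A u x) \<longlongrightarrow> specfam A s x) (at_right s)"
    using sf_rcont[OF A] by blast
  have c4: "\<forall>\<epsilon>>0. \<exists>\<delta>>0. \<forall>(n::nat) (l::nat \<Rightarrow> real) (t::nat \<Rightarrow> real).
          l 0 < - K - 1 \<and> K \<le> l n \<and>
          (\<forall>k\<in>{1..n}. l (k - 1) < l k \<and> l k - l (k - 1) < \<delta> \<and>
                        l (k - 1) \<le> t k \<and> t k \<le> l k) \<longrightarrow>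
          (\<forall>x. norm (A x - (\<Sum>k\<in>{1..n}. scaleR (t k) (specfam A (l k) x - specfam A (l (k - 1)) x)))
                 \<le> \<epsilon> * norm x)"
  proof (intro allI impI)
    fix \<epsilon> :: real assume e: "0 < \<epsilon>"
    show "\<exists>\<delta>>0. \<forall>(n::nat) (l::nat \<Rightarrow> real) (t::nat \<Rightarrow> real).
          l 0 < - K - 1 \<and> K \<le> l n \<and>
          (\<forall>k\<in>{1..n}. l (k - 1) < l k \<and> l k - l (k - 1) < \<delta> \<and>
                        l (k - 1) \<le> t k \<and> t k \<le> l k) \<longrightarrow>
          (\<forall>x. norm (A x - (\<Sum>k\<in>{1..n}. scaleR (t k) (specfam A (l k) x - specfam A (l (k - 1)) x)))
                 \<le> \<epsilon> * norm x)"
      using riemann_estimate[OF A K(2) K(1) e] e by (intro exI[of _ "\<epsilon> / 3"]) auto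
  qed
  have c5: "\<forall>s < - K - 1. specfam A s = (\<lambda>x. 0)"
    using sf_low[OF A K(2)] by (auto simp: fun_eq_iff)
  have c6: "\<forall>s\<ge>K. specfam A s = id"
    using sf_high[OF A K(2)] by (auto simp: fun_eq_iff)
  show ?thesis unfolding is_spectral_family_def
    using c1 c2 c3 c4 c5 c6 K(1) by (intro conjI c1 c2 c3 exI[of _ "- K - 1"] exI[of _ K]) auto
qed

lemma le_of_all_lt:
  fixes a s c :: real
  assumes H: "\<And>u. u < s \<Longrightarrow> u * c \<le> a" and c: "0 \<le> c"
  shows "s * c \<le> a"
proof -
  have "- a \<le> (- s) * c"
  proof (rule le_of_all_gt[OF _ c])
    fix u assume "u > - s"
    then have "- u < s" by simp
    from H[OF this] show "- a \<le> u * c" by simp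
  qed
  then show ?thesis by simp
qed

lemma sf_unique:
  fixes A :: "'a::chilbert \<Rightarrow> 'a" and F :: "real \<Rightarrow> 'a \<Rightarrow> 'a"
  assumes A: "hsa A" and F: "is_spectral_family A F"
  shows "F = specfam A"
proof -
  note Fall = F[unfolded is_spectral_family_def]
  have F1: "\<And>s. bounded_clinear (F s) \<and> F s \<circ> F s = F s \<and> adj (F s) = F s"
    using Fall[THEN conjunct1] by blast
  have F2: "\<And>s u. s \<le> u \<Longrightarrow> proj_le (F s) (F u)"
    using Fall[THEN conjunct2, THEN conjunct1] by blast
  have F3: "\<And>s x. ((\<lambda>u. F u x) \<longlongrightarrow> F s x) (at_right s)"
    using Fall[THEN conjunct2, THEN conjunct2, THEN conjunct1] by blast
  note F4 = Fall[THEN conjunct2, THEN conjunct2, THEN conjunct2]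
  from F4 obtain a b where ab: "a < b" and Fa: "\<forall>s<a. F s = (\<lambda>x. 0)" and Fb: "\<forall>s\<ge>b. F s = id"
    and RSp: "\<forall>\<epsilon>>0. \<exists>\<delta>>0. \<forall>(n::nat) (l::nat \<Rightarrow> real) (t::nat \<Rightarrow> real).
          l 0 < a \<and> b \<le> l n \<and>
          (\<forall>k\<in>{1..n}. l (k - 1) < l k \<and> l k - l (k - 1) < \<delta> \<and>
                        l (k - 1) \<le> t k \<and> t k \<le> l k) \<longrightarrow>
          (\<forall>x. norm (A x - (\<Sum>k\<in>{1..n}. scaleR (t k) (F (l k) x - F (l (k - 1)) x)))
                 \<le> \<epsilon> * norm x)"
    by (elim exE conjE) (rule that)
  have Fbcl: "bounded_clinear (F s)" for s using F1 by blast
  have Fh: "hproj (F s)" for s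
  proof -
    have "cinner (F s x) y = cinner x (F s y)" for x y
      using adj_prop[OF Fbcl, of s x y] F1[of s] by simp
    moreover have "F s (F s x) = F s x" for x using F1[of s] by (simp add: fun_eq_iff)
    ultimately show ?thesis unfolding hproj_def by (auto intro: hsaI Fbcl)
  qed
  have Fle1: "F u (F s x) = F s x" and Fle2: "F s (F u x) = F s x" if "s \<le> u" for s u x
    using hproj_le_comm[OF Fh Fh, of s u] F2[OF that] unfolding proj_le_def by auto
  have Fcomm: "F s (F u x) = F u (F s x)" for s u x
    by (cases "s \<le> u") (auto simp: Fle1 Fle2)
  have Fnm: "(norm (F s y))\<^sup>2 \<le> (norm (F u y))\<^sup>2" if "s \<le> u" for s u y
  proof -
    have "norm (F s (F u y)) \<le> norm (F u y)" by (rule hproj_norm_le[OF Fh])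
    then show ?thesis using Fle2[OF that] by (simp add: power_mono)
  qed
  define RS where "RS n l t x = (\<Sum>k\<in>{1..n}. scaleR (t k) (F (l k) x - F (l (k - 1)) x))"
    for n and l t :: "nat \<Rightarrow> real" and x
  have approx: "\<exists>n l. l 0 < a \<and> b \<le> l n \<and> (\<forall>k\<in>{1..n}. l (k - 1) < l k \<and> l k - l (k - 1) < \<epsilon>) \<and>
      (\<forall>t. (\<forall>k\<in>{1..n}. l (k - 1) \<le> t k \<and> t k \<le> l k) \<longrightarrow> (\<forall>x. norm (A x - RS n l t x) \<le> \<epsilon> * norm x))"
    if e: "\<epsilon> > 0" for \<epsilon>
  proof -
    obtain \<delta> where d: "\<delta> > 0" and dP: "\<forall>(n::nat) (l::nat \<Rightarrow> real) (t::nat \<Rightarrow> real).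
          l 0 < a \<and> b \<le> l n \<and>
          (\<forall>k\<in>{1..n}. l (k - 1) < l k \<and> l k - l (k - 1) < \<delta> \<and>
                        l (k - 1) \<le> t k \<and> t k \<le> l k) \<longrightarrow>
          (\<forall>x. norm (A x - (\<Sum>k\<in>{1..n}. scaleR (t k) (F (l k) x - F (l (k - 1)) x)))
                 \<le> \<epsilon> * norm x)" using RSp e by blast
    define h where "h = min \<delta> \<epsilon> / 2"
    have h: "0 < h" "h < \<delta>" "h < \<epsilon>" unfolding h_def using d e by auto
    obtain n :: nat where n: "b - a + 1 < real n * h" using ex_less_of_nat_mult[OF h(1)] by blast
    define l where "l k = a - 1 + real k * h" for k :: nat
    have l0: "l 0 < a" unfolding l_def by simp
    have ln: "b \<le> l n" unfolding l_def using n by simp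
    have lk: "l (k - 1) < l k \<and> l k - l (k - 1) < \<epsilon>" and lkd: "l k - l (k - 1) < \<delta>" if "k \<in> {1..n}" for k
    proof -
      have "l k - l (k - 1) = h" unfolding l_def using that by (auto simp: of_nat_diff algebra_simps)
      then show "l (k - 1) < l k \<and> l k - l (k - 1) < \<epsilon>" "l k - l (k - 1) < \<delta>" using h by auto
    qed
    have c3: "\<forall>k\<in>{1..n}. l (k - 1) < l k \<and> l k - l (k - 1) < \<epsilon>" using lk by blast
    have c4: "\<forall>t. (\<forall>k\<in>{1..n}. l (k - 1) \<le> t k \<and> t k \<le> l k) \<longrightarrow> (\<forall>x. norm (A x - RS n l t x) \<le> \<epsilon> * norm x)"
    proof (intro allI impI)
      fix t :: "nat \<Rightarrow> real" and x
      assume tk: "\<forall>k\<in>{1..n}. l (k - 1) \<le> t k \<and> t k \<le> l k"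
      have prem: "l 0 < a \<and> b \<le> l n \<and> (\<forall>k\<in>{1..n}. l (k - 1) < l k \<and> l k - l (k - 1) < \<delta> \<and>
                        l (k - 1) \<le> t k \<and> t k \<le> l k)"
        using l0 ln lk lkd tk by simp
      have "\<forall>x. norm (A x - (\<Sum>k\<in>{1..n}. scaleR (t k) (F (l k) x - F (l (k - 1)) x))) \<le> \<epsilon> * norm x"
        using dP prem by blast
      then show "norm (A x - RS n l t x) \<le> \<epsilon> * norm x" unfolding RS_def by blast
    qed
    show ?thesis using l0 ln c3 c4 by blast
  qed
  have RSform: "Re (cinner (RS n l t y) y) = (\<Sum>k\<in>{1..n}. t k * ((norm (F (l k) y))\<^sup>2 - (norm (F (l (k - 1)) y))\<^sup>2))"
    for n l t y
    unfolding RS_def by (simp add: cinner_sum_left cinner_scaleR_left cinner_diff_left hproj_form[OF Fh])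
  have telesc: "(\<Sum>k\<in>{1..n}. (norm (F (l k) y))\<^sup>2 - (norm (F (l (k - 1)) y))\<^sup>2) = (norm y)\<^sup>2"
    if "l 0 < a" "b \<le> l n" for n :: nat and l :: "nat \<Rightarrow> real" and y
    using telescope_1n[of "\<lambda>k. (norm (F (l k) y))\<^sup>2" n] that Fa Fb by simp
  have err: "\<bar>Re (cinner (A y) y) - Re (cinner (RS n l t y) y)\<bar> \<le> \<epsilon> * (norm y)\<^sup>2"
    if "norm (A y - RS n l t y) \<le> \<epsilon> * norm y" for n l t y \<epsilon>
  proof -
    have "\<bar>Re (cinner (A y - RS n l t y) y)\<bar> \<le> cmod (cinner (A y - RS n l t y) y)" by (rule abs_Re_le_cmod)
    also have "\<dots> \<le> norm (A y - RS n l t y) * norm y" by (rule CS)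
    also have "\<dots> \<le> (\<epsilon> * norm y) * norm y" by (rule mult_right_mono[OF that]) simp
    finally show ?thesis by (simp add: cinner_diff_left power2_eq_square mult_ac)
  qed
  have FA: "F s (A x) = A (F s x)" for s x
  proof -
    define d where "d = norm (F s (A x) - A (F s x))"
    have "d \<le> \<epsilon> * (2 * norm x)" if e: "\<epsilon> > 0" for \<epsilon>
    proof -
      obtain n l where nl: "l 0 < a" "b \<le> l n" "\<forall>k\<in>{1..n}. l (k - 1) < l k \<and> l k - l (k - 1) < \<epsilon>"
        "\<forall>t. (\<forall>k\<in>{1..n}. l (k - 1) \<le> t k \<and> t k \<le> l k) \<longrightarrow> (\<forall>x. norm (A x - RS n l t x) \<le> \<epsilon> * norm x)"
        using approx[OF e] by blast
      have ap: "norm (A z - RS n l l z) \<le> \<epsilon> * norm z" for z using nl(3,4) by (auto intro: less_imp_le)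
      have c: "RS n l l (F s x) = F s (RS n l l x)"
        unfolding RS_def by (simp add: bcl_sum[OF Fbcl] bcl_scaleR[OF Fbcl] bcl_diff[OF Fbcl] Fcomm)
      have eq: "F s (A x) - A (F s x) = F s (A x - RS n l l x) + (RS n l l (F s x) - A (F s x))"
        by (simp add: c bcl_diff[OF Fbcl])
      have tri: "d \<le> norm (F s (A x - RS n l l x)) + norm (RS n l l (F s x) - A (F s x))"
        unfolding d_def eq by (rule norm_triangle_ineq)
      have t1: "norm (F s (A x - RS n l l x)) \<le> \<epsilon> * norm x"
        by (rule order_trans[OF hproj_norm_le[OF Fh] ap])
      have t2: "norm (RS n l l (F s x) - A (F s x)) \<le> \<epsilon> * norm x"
      proof -
        have "norm (RS n l l (F s x) - A (F s x)) = norm (A (F s x) - RS n l l (F s x))" by (rule norm_minus_commute)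
        also have "\<dots> \<le> \<epsilon> * norm (F s x)" by (rule ap)
        also have "\<dots> \<le> \<epsilon> * norm x" using hproj_norm_le[OF Fh, of s x] e by (intro mult_left_mono) auto
        finally show ?thesis .
      qed
      show ?thesis using tri t1 t2 by simp
    qed
    then have "d \<le> 0 * (2 * norm x)" by (rule le_of_all_gt) auto
    then show ?thesis unfolding d_def by simp
  qed
  have U2: "Re (cinner (A y) y) \<le> s * (norm y)\<^sup>2" if y: "F s y = y" for s y
  proof (rule le_of_all_gt)
    fix u assume u: "u > s"
    define \<epsilon> where "\<epsilon> = (u - s) / 2"
    have e: "\<epsilon> > 0" unfolding \<epsilon>_def using u by simp
    obtain n l where nl: "l 0 < a" "b \<le> l n" "\<forall>k\<in>{1..n}. l (k - 1) < l k \<and> l k - l (k - 1) < \<epsilon>"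
      "\<forall>t. (\<forall>k\<in>{1..n}. l (k - 1) \<le> t k \<and> t k \<le> l k) \<longrightarrow> (\<forall>x. norm (A x - RS n l t x) \<le> \<epsilon> * norm x)"
      using approx[OF e] by blast
    have ap: "norm (A y - RS n l l y) \<le> \<epsilon> * norm y" using nl(3,4) by (auto intro: less_imp_le)
    define g where "g k = (norm (F (l k) y))\<^sup>2 - (norm (F (l (k - 1)) y))\<^sup>2" for k
    have "Re (cinner (RS n l l y) y) = (\<Sum>k\<in>{1..n}. l k * g k)" unfolding g_def by (rule RSform)
    also have "\<dots> \<le> (\<Sum>k\<in>{1..n}. (s + \<epsilon>) * g k)"
    proof (rule sum_mono)
      fix k assume k: "k \<in> {1..n}"
      have lkk: "l (k - 1) < l k" "l k - l (k - 1) < \<epsilon>" using nl(3) k by blast+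
      then have g0: "0 \<le> g k" unfolding g_def using Fnm[of "l (k - 1)" "l k" y] by simp
      show "l k * g k \<le> (s + \<epsilon>) * g k"
      proof (cases "s \<le> l (k - 1)")
        case True
        then have "F (l (k - 1)) y = y" "F (l k) y = y"
          using Fle1[of s "l (k - 1)" y] Fle1[of s "l k" y] lkk y by auto
        then have "g k = 0" unfolding g_def by simp
        then show ?thesis by simp
      next
        case False
        then have "l k \<le> s + \<epsilon>" using lkk by auto
        then show ?thesis using g0 by (intro mult_right_mono) auto
      qed
    qed
    also have "\<dots> = (s + \<epsilon>) * (norm y)\<^sup>2" unfolding g_def sum_distrib_left[symmetric] using telesc nl(1,2) by simp
    finally have "Re (cinner (RS n l l y) y) \<le> (s + \<epsilon>) * (norm y)\<^sup>2" .
    moreover have "\<bar>Re (cinner (A y) y) - Re (cinner (RS n l l y) y)\<bar> \<le> \<epsilon> * (norm y)\<^sup>2" by (rule err[OF ap])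
    moreover have "(s + \<epsilon>) * (norm y)\<^sup>2 + \<epsilon> * (norm y)\<^sup>2 = u * (norm y)\<^sup>2"
      unfolding \<epsilon>_def by (simp add: field_simps)
    ultimately show "Re (cinner (A y) y) \<le> u * (norm y)\<^sup>2" by (simp add: abs_le_iff)
  qed simp
  have U3: "s * (norm y)\<^sup>2 \<le> Re (cinner (A y) y)" if y: "F s y = 0" for s y
  proof (rule le_of_all_lt)
    fix u assume u: "u < s"
    define \<epsilon> where "\<epsilon> = (s - u) / 2"
    have e: "\<epsilon> > 0" unfolding \<epsilon>_def using u by simp
    obtain n l where nl: "l 0 < a" "b \<le> l n" "\<forall>k\<in>{1..n}. l (k - 1) < l k \<and> l k - l (k - 1) < \<epsilon>"
      "\<forall>t. (\<forall>k\<in>{1..n}. l (k - 1) \<le> t k \<and> t k \<le> l k) \<longrightarrow> (\<forall>x. norm (A x - RS n l t x) \<le> \<epsilon> * norm x)"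
      using approx[OF e] by blast
    define t where "t k = l (k - 1)" for k
    have tk: "\<forall>k\<in>{1..n}. l (k - 1) \<le> t k \<and> t k \<le> l k" unfolding t_def using nl(3) less_imp_le by blast
    have ap: "norm (A y - RS n l t y) \<le> \<epsilon> * norm y" using nl(4) tk by blast
    define g where "g k = (norm (F (l k) y))\<^sup>2 - (norm (F (l (k - 1)) y))\<^sup>2" for k
    have "(s - \<epsilon>) * (norm y)\<^sup>2 = (\<Sum>k\<in>{1..n}. (s - \<epsilon>) * g k)"
      unfolding g_def sum_distrib_left[symmetric] using telesc nl(1,2) by simp
    also have "\<dots> \<le> (\<Sum>k\<in>{1..n}. t k * g k)"
    proof (rule sum_mono)
      fix k assume k: "k \<in> {1..n}"
      have lkk: "l (k - 1) < l k" "l k - l (k - 1) < \<epsilon>" using nl(3) k by blast+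
      then have g0: "0 \<le> g k" unfolding g_def using Fnm[of "l (k - 1)" "l k" y] by simp
      show "(s - \<epsilon>) * g k \<le> t k * g k"
      proof (cases "l k \<le> s")
        case True
        then have "F (l (k - 1)) y = 0" "F (l k) y = 0"
          using Fle2[of "l (k - 1)" s y] Fle2[of "l k" s y] lkk y
          by (auto simp: bcl_zero[OF Fbcl])
        then have "g k = 0" unfolding g_def by simp
        then show ?thesis by simp
      next
        case False
        then have "s - \<epsilon> \<le> t k" using lkk unfolding t_def by auto
        then show ?thesis using g0 by (intro mult_right_mono) auto
      qed
    qed
    also have "\<dots> = Re (cinner (RS n l t y) y)" unfolding g_def by (rule RSform[symmetric])
    finally have "(s - \<epsilon>) * (norm y)\<^sup>2 \<le> Re (cinner (RS n l t y) y)" .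
    moreover have "\<bar>Re (cinner (A y) y) - Re (cinner (RS n l t y) y)\<bar> \<le> \<epsilon> * (norm y)\<^sup>2" by (rule err[OF ap])
    moreover have "(s - \<epsilon>) * (norm y)\<^sup>2 - \<epsilon> * (norm y)\<^sup>2 = u * (norm y)\<^sup>2"
      unfolding \<epsilon>_def by (simp add: field_simps)
    ultimately show "u * (norm y)\<^sup>2 \<le> Re (cinner (A y) y)" by (simp add: abs_le_iff)
  qed simp
  show ?thesis
  proof
    fix s
    show "F s = specfam A s"
    proof (rule hproj_eq[OF Fh sf_hproj[OF A]])
      show "range (F s) = range (specfam A s)"
      proof
        show "range (F s) \<subseteq> range (specfam A s)"
        proof
          fix y assume "y \<in> range (F s)"
          have "kproj (\<lambda>x. A x - scaleR s x) y = y"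
          proof (rule kproj_max[OF hsa_shift[OF A] hproj_range_sub[OF Fh[of s]]])
            show "y \<in> range (F s)" by fact
            show "kproj (\<lambda>x. A x - scaleR s x) z \<in> range (F s)" if "z \<in> range (F s)" for z
            proof -
              have "F s z = z" using that hproj_range[OF Fh] by blast
              moreover have "F s (specfam A s z) = specfam A s (F s z)"
                by (rule sf_comm[OF A Fbcl[of s] FA[of s], symmetric])
              ultimately have "F s (specfam A s z) = specfam A s z" by simp
              then show ?thesis unfolding specfam_def[symmetric] using hproj_range[OF Fh] by blast
            qed
            show "Re (cinner (A z - scaleR s z) z) \<le> 0" if "z \<in> range (F s)" for z
            proof -
              have "F s z = z" using that hproj_range[OF Fh] by blast
              then have "Re (cinner (A z) z) \<le> s * (norm z)\<^sup>2" by (rule U2)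
              then show ?thesis by (simp add: cinner_diff_left cinner_scaleR_left norm_sq)
            qed
          qed
          then show "y \<in> range (specfam A s)" unfolding specfam_def[symmetric]
            using hproj_range[OF sf_hproj[OF A]] by blast
        qed
      next
        show "range (specfam A s) \<subseteq> range (F s)"
        proof
          fix y assume "y \<in> range (specfam A s)"
          then have ys: "specfam A s y = y" using hproj_range[OF sf_hproj[OF A]] by blast
          have fix_u: "F u y = y" if u: "u > s" for u
          proof -
            define z where "z = y - F u y"
            have Fz: "F u z = 0" unfolding z_def by (simp add: bcl_diff[OF Fbcl] hproj_idem[OF Fh])
            have "specfam A s z = z" unfolding z_def
              by (simp add: bcl_diff[OF sf_bcl[OF A]] ys sf_comm[OF A Fbcl[of u] FA[of u]])
            then have up: "Re (cinner (A z) z) \<le> s * (norm z)\<^sup>2" by (rule sf_upper[OF A])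
            have lo: "u * (norm z)\<^sup>2 \<le> Re (cinner (A z) z)" by (rule U3[OF Fz])
            have "(u - s) * (norm z)\<^sup>2 \<le> 0" using up lo by (simp add: algebra_simps)
            then have "(norm z)\<^sup>2 \<le> 0" using u by (simp add: mult_le_0_iff)
            then have "z = 0" by simp
            then show ?thesis unfolding z_def by simp
          qed
          have "((\<lambda>u. F u y) \<longlongrightarrow> F s y) (at_right s)" by (rule F3)
          moreover have "((\<lambda>u. F u y) \<longlongrightarrow> y) (at_right s)"
          proof (rule Lim_transform_eventually[OF tendsto_const])
            show "\<forall>\<^sub>F u in at_right s. y = F u y"
              using eventually_at_right_less[of s] by eventually_elim (simp add: fix_u)
          qed
          ultimately have "F s y = y" by (rule tendsto_unique[rotated]) simp
          then show "y \<in> range (F s)" using hproj_range[OF Fh] by blast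
        qed
      qed
    qed
  qed
qed

lemma spectral_family_eq:
  fixes A :: "'a::chilbert \<Rightarrow> 'a"
  assumes A: "hsa A"
  shows "spectral_family A = specfam A"
  unfolding spectral_family_def
proof (rule the_equality)
  show "is_spectral_family A (specfam A)" by (rule sf_is_spectral_family[OF A])
  show "F = specfam A" if "is_spectral_family A F" for F by (rule sf_unique[OF A that])
qed

section \<open>Von Neumann algebra facts\<close>

context
  fixes R :: "('a::chilbert \<Rightarrow> 'a) set"
  assumes vN: "von_neumann_algebra R"
begin

lemma vn_bcl: "T \<in> R \<Longrightarrow> bounded_clinear T" using vN unfolding von_neumann_algebra_def by blast
lemma vn_id: "id \<in> R" using vN unfolding von_neumann_algebra_def by blast
lemma vn_adj: "T \<in> R \<Longrightarrow> adj T \<in> R" using vN unfolding von_neumann_algebra_def by blast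
lemma vn_cc: "commutant (commutant R) = R" using vN unfolding von_neumann_algebra_def by blast

lemma comm_D: "X \<in> commutant R \<Longrightarrow> Y \<in> R \<Longrightarrow> X (Y x) = Y (X x)"
  unfolding commutant_def by (auto simp: fun_eq_iff)

lemma comm_bcl: "X \<in> commutant R \<Longrightarrow> bounded_clinear X"
  unfolding commutant_def by blast

lemma in_R_by_comm:
  assumes G: "bounded_clinear G" and c: "\<And>X x. X \<in> commutant R \<Longrightarrow> G (X x) = X (G x)"
  shows "G \<in> R"
proof -
  have "G \<in> commutant (commutant R)"
    unfolding commutant_def[of "commutant R"] using G c by (auto simp: fun_eq_iff)
  then show ?thesis using vn_cc by simp
qed

lemma proj_hproj: "P \<in> projections R \<Longrightarrow> hproj P"
proof -
  assume P: "P \<in> projections R"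
  then have Pb: "bounded_clinear P" and Pi: "P \<circ> P = P" and Pa: "adj P = P"
    unfolding projections_def using vn_bcl by auto
  have "cinner (P x) y = cinner x (P y)" for x y using adj_prop[OF Pb, of x y] Pa by simp
  moreover have "P (P x) = P x" for x using Pi by (simp add: fun_eq_iff)
  ultimately show "hproj P" unfolding hproj_def by (auto intro: hsaI Pb)
qed

lemma hproj_projections: "hproj P \<Longrightarrow> P \<in> R \<Longrightarrow> P \<in> projections R"
  unfolding projections_def
  using adj_unique[of P P, OF hproj_sym] hproj_idem by (auto simp: fun_eq_iff)

lemma id_projections: "id \<in> projections R"
  by (rule hproj_projections[OF _ vn_id]) (auto simp: hproj_def intro: hsaI bcl_id)

lemma meet_exists:
  assumes P: "P \<in> projections R" and Q: "Q \<in> projections R"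
  shows "\<exists>G\<in>projections R. range G = range P \<inter> range Q"
proof -
  have Ph: "hproj P" and Qh: "hproj Q" using P Q by (auto intro: proj_hproj)
  define M where "M = range P \<inter> range Q"
  have clM: "closed M" unfolding M_def by (intro closed_Int hproj_range_closed Ph Qh)
  have subM: "hsubspace M" unfolding M_def hsubspace_def
    using hproj_range_sub[OF Ph] hproj_range_sub[OF Qh] unfolding hsubspace_def by blast
  define G where "G = proj M"
  have Gh: "hproj G" unfolding G_def by (rule hproj_proj[OF clM subM])
  have rG: "range G = M" unfolding G_def by (rule proj_range[OF clM subM])
  have "G \<in> R"
  proof (rule in_R_by_comm[OF hproj_bcl[OF Gh]])
    fix X x assume X: "X \<in> commutant R"
    have Xb: "bounded_clinear X" by (rule comm_bcl[OF X])
    have PR: "P \<in> R" and QR: "Q \<in> R" using P Q unfolding projections_def by auto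
    have inv: "S y \<in> M" if S: "\<And>z. S (P z) = P (S z)" "\<And>z. S (Q z) = Q (S z)" and y: "y \<in> M" for S y
    proof -
      have "P y = y" "Q y = y" using y hproj_range[OF Ph] hproj_range[OF Qh] unfolding M_def by auto
      then have "P (S y) = S y" "Q (S y) = S y" using S[of y] by auto
      then show ?thesis unfolding M_def using hproj_range[OF Ph] hproj_range[OF Qh] by auto
    qed
    have XP: "X (P z) = P (X z)" "X (Q z) = Q (X z)" for z using comm_D[OF X PR] comm_D[OF X QR] by auto
    have aXP: "adj X (P z) = P (adj X z)" "adj X (Q z) = Q (adj X z)" for z
      using adj_comm[OF Xb hproj_hsa[OF Ph] XP(1)] adj_comm[OF Xb hproj_hsa[OF Qh] XP(2)] by auto
    show "G (X x) = X (G x)"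
    proof (rule inv_comm[OF Gh Xb])
      show "G (X (G z)) = X (G z)" for z
        using inv[of X "G z", OF XP(1) XP(2)] rG hproj_range[OF Gh] by blast
      show "G (adj X (G z)) = adj X (G z)" for z
        using inv[of "adj X" "G z", OF aXP(1) aXP(2)] rG hproj_range[OF Gh] by blast
    qed
  qed
  then have "G \<in> projections R" by (rule hproj_projections[OF Gh])
  then show ?thesis using rG M_def by blast
qed

lemma sf_projections:
  assumes A: "hsa A" and AR: "A \<in> R"
  shows "specfam A s \<in> projections R"
proof (rule hproj_projections[OF sf_hproj[OF A]])
  show "specfam A s \<in> R"
  proof (rule in_R_by_comm[OF sf_bcl[OF A]])
    fix X x assume X: "X \<in> commutant R"
    show "specfam A s (X x) = X (specfam A s x)"
      by (rule sf_comm[OF A comm_bcl[OF X]]) (rule comm_D[OF X AR])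
  qed
qed

section \<open>Quasipoints\<close>

lemma qp_base: "quasipoint R B \<Longrightarrow> proj_filter_base R B" unfolding quasipoint_def by blast

lemma qp_max: "quasipoint R B \<Longrightarrow> proj_filter_base R C \<Longrightarrow> B \<subseteq> C \<Longrightarrow> C = B"
  unfolding quasipoint_def by blast

lemma qp_sub: "quasipoint R B \<Longrightarrow> B \<subseteq> projections R"
  unfolding quasipoint_def proj_filter_base_def by blast

lemma qp_nz: "quasipoint R B \<Longrightarrow> (\<lambda>x. 0) \<notin> B"
  unfolding quasipoint_def proj_filter_base_def by blast

lemma qp_dir: "quasipoint R B \<Longrightarrow> P \<in> B \<Longrightarrow> Q \<in> B \<Longrightarrow> \<exists>S\<in>B. range S \<subseteq> range P \<inter> range Q"
  unfolding quasipoint_def proj_filter_base_def by blast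

lemma range_zero_iff: "range S \<subseteq> {0} \<Longrightarrow> S = (\<lambda>x. 0)"
  by (auto simp: fun_eq_iff)

lemma qp_up:
  assumes B: "quasipoint R B" and P: "P \<in> B" and Q: "Q \<in> projections R" and le: "range P \<subseteq> range Q"
  shows "Q \<in> B"
proof -
  have "insert Q B = B"
  proof (rule qp_max[OF B])
    show "B \<subseteq> insert Q B" by blast
    show "proj_filter_base R (insert Q B)"
      unfolding proj_filter_base_def
    proof (intro conjI)
      show "insert Q B \<subseteq> projections R" using Q qp_sub[OF B] by blast
      have "Q \<noteq> (\<lambda>x. 0)"
      proof
        assume "Q = (\<lambda>x. 0)"
        then have "range P \<subseteq> {0}" using le by auto
        then have "P = (\<lambda>x. 0)" by (rule range_zero_iff)
        then show False using P qp_nz[OF B] by simp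
      qed
      then show "(\<lambda>x. 0) \<notin> insert Q B" using qp_nz[OF B] by auto
      show "\<forall>P1\<in>insert Q B. \<forall>P2\<in>insert Q B. \<exists>S\<in>insert Q B. range S \<subseteq> range P1 \<inter> range P2"
      proof (intro ballI)
        fix P1 P2 assume P1: "P1 \<in> insert Q B" and P2: "P2 \<in> insert Q B"
        obtain Q1 where Q1: "Q1 \<in> B" "range Q1 \<subseteq> range P1" using P1 P le by auto
        obtain Q2 where Q2: "Q2 \<in> B" "range Q2 \<subseteq> range P2" using P2 P le by auto
        obtain S where "S \<in> B" "range S \<subseteq> range Q1 \<inter> range Q2" using qp_dir[OF B Q1(1) Q2(1)] by blast
        then show "\<exists>S\<in>insert Q B. range S \<subseteq> range P1 \<inter> range P2" using Q1 Q2 by blast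
      qed
    qed
  qed
  then show ?thesis by blast
qed

lemma qp_id: "quasipoint R B \<Longrightarrow> P \<in> B \<Longrightarrow> id \<in> B"
  by (rule qp_up[OF _ _ id_projections]) auto

lemma qp_not_in:
  assumes B: "quasipoint R B" and Pr: "Pr \<in> projections R" and nB: "Pr \<notin> B" and ne: "B \<noteq> {}"
  shows "\<exists>Q\<in>B. \<not> (\<exists>S\<in>projections R. S \<noteq> (\<lambda>x. 0) \<and> range S \<subseteq> range Q \<inter> range Pr)"
proof (rule ccontr)
  assume "\<not> ?thesis"
  then have H: "\<And>Q. Q \<in> B \<Longrightarrow> \<exists>S\<in>projections R. S \<noteq> (\<lambda>x. 0) \<and> range S \<subseteq> range Q \<inter> range Pr" by blast
  define C where "C = B \<union> {G. G \<in> projections R \<and> (\<exists>Q\<in>B. range G = range Q \<inter> range Pr)}"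
  have meetC: "\<exists>G\<in>C. range G = range Q \<inter> range Pr" if Qb: "Q \<in> B" for Q
  proof -
    have "Q \<in> projections R" using qp_sub[OF B] Qb by blast
    then obtain G where "G \<in> projections R" "range G = range Q \<inter> range Pr"
      using meet_exists[OF _ Pr] by blast
    then show ?thesis unfolding C_def using Qb by blast
  qed
  have wit: "\<exists>Q\<in>B. range Q \<inter> range Pr \<subseteq> range X" if "X \<in> C" for X
    using that unfolding C_def by auto
  have "C = B"
  proof (rule qp_max[OF B])
    show "B \<subseteq> C" unfolding C_def by blast
    show "proj_filter_base R C"
      unfolding proj_filter_base_def
    proof (intro conjI)
      show "C \<subseteq> projections R" unfolding C_def using qp_sub[OF B] by blast
      show "(\<lambda>x. 0) \<notin> C"
      proof
        assume z: "(\<lambda>x. 0) \<in> C"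
        then have "(\<lambda>x. 0) \<notin> B \<Longrightarrow> \<exists>Q\<in>B. range (\<lambda>x::'a. 0::'a) = range Q \<inter> range Pr"
          unfolding C_def by blast
        then obtain Q where Q: "Q \<in> B" "range (\<lambda>x::'a. 0::'a) = range Q \<inter> range Pr"
          using qp_nz[OF B] by blast
        obtain S where S: "S \<in> projections R" "S \<noteq> (\<lambda>x. 0)" "range S \<subseteq> range Q \<inter> range Pr"
          using H[OF Q(1)] by blast
        then have "range S \<subseteq> {0}" using Q(2) by auto
        then show False using S(2) range_zero_iff by blast
      qed
      show "\<forall>P1\<in>C. \<forall>P2\<in>C. \<exists>S\<in>C. range S \<subseteq> range P1 \<inter> range P2"
      proof (intro ballI)
        fix P1 P2 assume P1: "P1 \<in> C" and P2: "P2 \<in> C"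
        obtain Q1 where Q1: "Q1 \<in> B" "range Q1 \<inter> range Pr \<subseteq> range P1" using wit[OF P1] by blast
        obtain Q2 where Q2: "Q2 \<in> B" "range Q2 \<inter> range Pr \<subseteq> range P2" using wit[OF P2] by blast
        obtain Q3 where Q3: "Q3 \<in> B" "range Q3 \<subseteq> range Q1 \<inter> range Q2" using qp_dir[OF B Q1(1) Q2(1)] by blast
        obtain G where G: "G \<in> C" "range G = range Q3 \<inter> range Pr" using meetC[OF Q3(1)] by blast
        have q31: "range Q3 \<subseteq> range Q1" and q32: "range Q3 \<subseteq> range Q2"
          using Q3(2) by (simp_all only: Int_subset_iff)
        have "range G \<subseteq> range P1" unfolding G(2)
          by (rule order_trans[OF Int_mono[OF q31 order_refl] Q1(2)])
        moreover have "range G \<subseteq> range P2" unfolding G(2)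
          by (rule order_trans[OF Int_mono[OF q32 order_refl] Q2(2)])
        ultimately show "\<exists>S\<in>C. range S \<subseteq> range P1 \<inter> range P2" using G(1) by blast
      qed
    qed
  qed
  obtain P0 where "P0 \<in> B" using ne by blast
  then have idB: "id \<in> B" by (rule qp_id[OF B])
  obtain G where G: "G \<in> C" "range G = range id \<inter> range Pr" using meetC[OF idB] by blast
  have GP: "G \<in> projections R" using G(1) \<open>C = B\<close> qp_sub[OF B] by blast
  have rg: "range G = range Pr" using G(2) by simp
  have "G = Pr" by (rule hproj_eq[OF proj_hproj[OF GP] proj_hproj[OF Pr] rg])
  then show False using G \<open>C = B\<close> nB by simp
qed

end


theorem theorem2p3:
  fixes R :: "('a::chilbert \<Rightarrow> 'a) set" and A :: "'a \<Rightarrow> 'a"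
  assumes "von_neumann_algebra R"
    and "A \<in> self_adjoint_part R"
  shows "continuous_map (stone_topology R) euclideanreal (observable_function A)"
proof -
  note vN = assms(1)
  have AR: "A \<in> R" and adjA: "adj A = A" using assms(2) unfolding self_adjoint_part_def by auto
  have Ab: "bounded_clinear A" by (rule vn_bcl[OF vN AR])
  have A: "hsa A"
  proof (rule hsaI[OF Ab])
    show "cinner (A x) y = cinner x (A y)" for x y using adj_prop[OF Ab, of x y] adjA by simp
  qed
  obtain K where K: "K > 0" "\<And>x. norm (A x) \<le> norm x * K" using bcl_bound[OF Ab] by blast
  define E where "E = specfam A"
  have sfeq: "spectral_family A = E" using spectral_family_eq[OF A] E_def by simp
  have EP: "E s \<in> projections R" for s unfolding E_def by (rule sf_projections[OF vN A AR])
  have Elow: "E s = (\<lambda>x. 0)" if "s < - K" for s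
    unfolding E_def using sf_low[OF A K(2) that] by (simp add: fun_eq_iff)
  have Ehigh: "E s = id" if "K \<le> s" for s
    unfolding E_def using sf_high[OF A K(2) that] by (simp add: fun_eq_iff)
  have Emono: "range (E s) \<subseteq> range (E u)" if "s \<le> u" for s u
    unfolding E_def by (rule sf_mono[OF A that])
  define SS where "SS = {{B \<in> stone_spectrum R. P \<in> B} | P. P \<in> projections R}"
  have X: "stone_topology R = topology_generated_by SS" unfolding stone_topology_def SS_def ..
  have top: "topspace (stone_topology R) = \<Union>SS" unfolding X by simp
  have openSS: "openin (stone_topology R) U" if "U \<in> SS" for U
    unfolding X openin_topology_generated_by_iff by (rule generate_topology_on.Basis[OF that])
  have openQ: "openin (stone_topology R) {B \<in> stone_spectrum R. P \<in> B}" if "P \<in> projections R" for P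
    by (rule openSS) (use that SS_def in blast)
  have f_eq: "observable_function A B = Inf {s. E s \<in> B}" for B
    unfolding observable_function_def sfeq ..
  have inTop: "B \<in> topspace (stone_topology R) \<longleftrightarrow> quasipoint R B \<and> (\<exists>P\<in>projections R. P \<in> B)" for B
    unfolding top SS_def stone_spectrum_def by auto
  have Sig: "{s. E s \<in> B} \<noteq> {}" "bdd_below {s. E s \<in> B}" "\<And>s. E s \<in> B \<Longrightarrow> - K \<le> s"
    if B: "quasipoint R B" "P \<in> B" for B P
  proof -
    have "id \<in> B" by (rule qp_id[OF vN B])
    then have "E K \<in> B" using Ehigh[of K] by simp
    then show "{s. E s \<in> B} \<noteq> {}" by blast
    show lb: "- K \<le> s" if "E s \<in> B" for s
    proof (rule ccontr)
      assume "\<not> - K \<le> s"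
      then have "E s = (\<lambda>x. 0)" by (intro Elow) simp
      then show False using that qp_nz[OF vN B(1)] by simp
    qed
    show "bdd_below {s. E s \<in> B}" by (rule bdd_belowI[of _ "- K"]) (use lb in blast)
  qed
  show ?thesis
    unfolding continuous_map_upper_lower_semicontinuous_lt
  proof (intro allI conjI)
    fix r :: real
    define UL where "UL = {{B \<in> stone_spectrum R. Q \<in> B} | Q. Q \<in> projections R \<and>
        (\<exists>\<mu>>r. \<not> (\<exists>S\<in>projections R. S \<noteq> (\<lambda>x. 0) \<and> range S \<subseteq> range Q \<inter> range (E \<mu>)))}"
    have "{B \<in> topspace (stone_topology R). observable_function A B > r} = \<Union>UL"
    proof
      show "{B \<in> topspace (stone_topology R). observable_function A B > r} \<subseteq> \<Union>UL"
      proof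
        fix B assume "B \<in> {B \<in> topspace (stone_topology R). observable_function A B > r}"
        then have B: "quasipoint R B" and P: "\<exists>P\<in>projections R. P \<in> B" and fB: "Inf {s. E s \<in> B} > r"
          using inTop f_eq by auto
        obtain P where PB: "P \<in> B" using P by blast
        define \<mu> where "\<mu> = (r + Inf {s. E s \<in> B}) / 2"
        have mu: "r < \<mu>" "\<mu> < Inf {s. E s \<in> B}" unfolding \<mu>_def using fB by auto
        have "E \<mu> \<notin> B"
        proof
          assume "E \<mu> \<in> B"
          then have "Inf {s. E s \<in> B} \<le> \<mu>" by (intro cInf_lower Sig(2)[OF B PB]) simp
          then show False using mu by simp
        qed
        then obtain Q where Q: "Q \<in> B" "\<not> (\<exists>S\<in>projections R. S \<noteq> (\<lambda>x. 0) \<and> range S \<subseteq> range Q \<inter> range (E \<mu>))"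
          using qp_not_in[OF vN B EP] PB by blast
        have QP: "Q \<in> projections R" using qp_sub[OF vN B] Q(1) by blast
        have "B \<in> {B \<in> stone_spectrum R. Q \<in> B}" using B Q(1) unfolding stone_spectrum_def by simp
        moreover have "{B \<in> stone_spectrum R. Q \<in> B} \<in> UL" unfolding UL_def using QP Q(2) mu(1) by blast
        ultimately show "B \<in> \<Union>UL" by blast
      qed
      show "\<Union>UL \<subseteq> {B \<in> topspace (stone_topology R). observable_function A B > r}"
      proof
        fix B assume "B \<in> \<Union>UL"
        then obtain Q \<mu> where B: "quasipoint R B" and QB: "Q \<in> B" and QP: "Q \<in> projections R" and mu: "\<mu> > r"
          and noS: "\<not> (\<exists>S\<in>projections R. S \<noteq> (\<lambda>x. 0) \<and> range S \<subseteq> range Q \<inter> range (E \<mu>))"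
          unfolding UL_def stone_spectrum_def by blast
        have "B \<in> topspace (stone_topology R)" using inTop B QB QP by blast
        moreover have "\<mu> \<le> Inf {s. E s \<in> B}"
        proof (rule cInf_greatest[OF Sig(1)[OF B QB]])
          fix s assume "s \<in> {s. E s \<in> B}"
          then have sB: "E s \<in> B" by simp
          show "\<mu> \<le> s"
          proof (rule ccontr)
            assume "\<not> \<mu> \<le> s"
            then have le: "range (E s) \<subseteq> range (E \<mu>)" by (intro Emono) simp
            obtain S where S: "S \<in> B" "range S \<subseteq> range Q \<inter> range (E s)" using qp_dir[OF vN B QB sB] by blast
            have "S \<in> projections R" using qp_sub[OF vN B] S(1) by blast
            moreover have "S \<noteq> (\<lambda>x. 0)" using S(1) qp_nz[OF vN B] by blast
            moreover have "range S \<subseteq> range Q \<inter> range (E \<mu>)" using S(2) le by blast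
            ultimately show False using noS by blast
          qed
        qed
        ultimately show "B \<in> {B \<in> topspace (stone_topology R). observable_function A B > r}"
          using mu f_eq by simp
      qed
    qed
    moreover have "openin (stone_topology R) (\<Union>UL)"
      by (rule openin_Union) (auto simp: UL_def intro!: openQ)
    ultimately show "openin (stone_topology R) {B \<in> topspace (stone_topology R). observable_function A B > r}"
      by simp
  next
    fix r :: real
    define UL where "UL = {{B \<in> stone_spectrum R. E s \<in> B} | s. s < r}"
    have "{B \<in> topspace (stone_topology R). observable_function A B < r} = \<Union>UL"
    proof
      show "{B \<in> topspace (stone_topology R). observable_function A B < r} \<subseteq> \<Union>UL"
      proof
        fix B assume "B \<in> {B \<in> topspace (stone_topology R). observable_function A B < r}"
        then have B: "quasipoint R B" and P: "\<exists>P\<in>projections R. P \<in> B" and fB: "Inf {s. E s \<in> B} < r"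
          using inTop f_eq by auto
        obtain P where PB: "P \<in> B" using P by blast
        obtain s where s: "s \<in> {s. E s \<in> B}" "s < r" using cInf_lessD[OF Sig(1)[OF B PB] fB] by blast
        have "B \<in> {B \<in> stone_spectrum R. E s \<in> B}" using B s(1) unfolding stone_spectrum_def by simp
        moreover have "{B \<in> stone_spectrum R. E s \<in> B} \<in> UL" unfolding UL_def using s(2) by blast
        ultimately show "B \<in> \<Union>UL" by blast
      qed
      show "\<Union>UL \<subseteq> {B \<in> topspace (stone_topology R). observable_function A B < r}"
      proof
        fix B assume "B \<in> \<Union>UL"
        then obtain s where B: "quasipoint R B" and sB: "E s \<in> B" and sr: "s < r"
          unfolding UL_def stone_spectrum_def by blast
        have "B \<in> topspace (stone_topology R)" using inTop B sB EP by blast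
        moreover have "Inf {s. E s \<in> B} \<le> s" by (intro cInf_lower Sig(2)[OF B sB]) (simp add: sB)
        ultimately show "B \<in> {B \<in> topspace (stone_topology R). observable_function A B < r}"
          using sr f_eq by simp
      qed
    qed
    moreover have "openin (stone_topology R) (\<Union>UL)"
      by (rule openin_Union) (auto simp: UL_def intro!: openQ EP)
    ultimately show "openin (stone_topology R) {B \<in> topspace (stone_topology R). observable_function A B < r}"
      by simp
  qed
qed

end
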